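(* Let $d\ge 3$ be fixed, $n\to\infty$ with $dn$ even, and run the push model on the configuration multigraph $\widetilde{\mathbb{G}}(n,d)$ starting from vertex $1$. Let $T_0$ be the first round in which the number of informed vertices exceeds $\ln^7 n$. Then with probability $1-o(1)$ we have $T_0 = O(\ln\ln n)$. Moreover, for sufficiently large $n$, with probability $1-o(1)$ the subgraph induced by the set of vertices informed at round $T_0$ is a tree.
   Context: Configuration model: with $V_n=\{1,\dots,n\}$ and clone set $V_n\times[d]$, choose a perfect matching of the clones uniformly at random; projecting each matched pair $\{(u,i),(v,j)\}$ to an edge $uv$ gives a $d$-regular multigraph (loops and multiple edges allowed) denoted $\widetilde{\mathbb{G}}(n,d)$. Push model: initially only vertex 1 is informed; in each round each informed vertex independently chooses one of its $d$ clones uniformly at random and informs the vertex owning the clone matched to it. Probabilities are over both the matching and the protocol. A tree here means the induced multigraph is connected with no cycles, loops or multiple edges. *)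

theory Defs
  imports "HOL-Probability.Probability"
begin

definition clones :: "nat \<Rightarrow> nat \<Rightarrow> (nat \<times> nat) set" where
  "clones n d = {1..n} \<times> {..<d}"

text \<open>Perfect matchings of the clone set, as fixed-point-free involutions on the
  clone set (extended by the identity outside, so the set is finite).\<close>
definition perfect_matchings :: "nat \<Rightarrow> nat \<Rightarrow> ((nat \<times> nat) \<Rightarrow> (nat \<times> nat)) set" where
  "perfect_matchings n d =
     {m. (\<forall>x\<in>clones n d. m x \<in> clones n d \<and> m x \<noteq> x \<and> m (m x) = x)
       \<and> (\<forall>x. x \<notin> clones n d \<longrightarrow> m x = x)}"

definition config_pmf :: "nat \<Rightarrow> nat \<Rightarrow> ((nat \<times> nat) \<Rightarrow> (nat \<times> nat)) pmf" where
  "config_pmf n d = pmf_of_set (perfect_matchings n d)"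

text \<open>Protocol randomness for one round: every vertex picks a uniformly random clone
  index independently (only the choices of informed vertices are used).\<close>
definition choice_pmf :: "nat \<Rightarrow> nat \<Rightarrow> (nat \<Rightarrow> nat) pmf" where
  "choice_pmf n d = Pi_pmf {1..n} 0 (\<lambda>_. pmf_of_set {..<d})"

definition push_space :: "nat \<Rightarrow> nat \<Rightarrow>
    (((nat \<times> nat) \<Rightarrow> (nat \<times> nat)) \<times> (nat \<Rightarrow> nat) stream) measure" where
  "push_space n d = measure_pmf (config_pmf n d) \<Otimes>\<^sub>M stream_space (measure_pmf (choice_pmf n d))"

primrec informed :: "((nat \<times> nat) \<Rightarrow> (nat \<times> nat)) \<Rightarrow> (nat \<Rightarrow> nat) stream \<Rightarrow> nat \<Rightarrow> nat set" where
  "informed m \<omega> 0 = {1}"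
| "informed m \<omega> (Suc t) =
     informed m \<omega> t \<union> (\<lambda>v. fst (m (v, (\<omega> !! t) v))) ` informed m \<omega> t"

definition is_T0 :: "nat \<Rightarrow> ((nat \<times> nat) \<Rightarrow> (nat \<times> nat)) \<Rightarrow> (nat \<Rightarrow> nat) stream \<Rightarrow> nat \<Rightarrow> bool" where
  "is_T0 n m \<omega> t \<longleftrightarrow>
     real (card (informed m \<omega> t)) > (ln (real n)) ^ 7 \<and>
     (\<forall>s<t. \<not> real (card (informed m \<omega> s)) > (ln (real n)) ^ 7)"

definition has_loop :: "nat \<Rightarrow> ((nat \<times> nat) \<Rightarrow> (nat \<times> nat)) \<Rightarrow> nat set \<Rightarrow> bool" where
  "has_loop d m S \<longleftrightarrow> (\<exists>u\<in>S. \<exists>i<d. fst (m (u, i)) = u)"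

definition edge_mult :: "nat \<Rightarrow> ((nat \<times> nat) \<Rightarrow> (nat \<times> nat)) \<Rightarrow> nat \<Rightarrow> nat \<Rightarrow> nat" where
  "edge_mult d m u v = card {(i, j). i < d \<and> j < d \<and> m (u, i) = (v, j)}"

definition has_multi_edge :: "nat \<Rightarrow> ((nat \<times> nat) \<Rightarrow> (nat \<times> nat)) \<Rightarrow> nat set \<Rightarrow> bool" where
  "has_multi_edge d m S \<longleftrightarrow> (\<exists>u\<in>S. \<exists>v\<in>S. u \<noteq> v \<and> edge_mult d m u v \<ge> 2)"

definition adj :: "nat \<Rightarrow> ((nat \<times> nat) \<Rightarrow> (nat \<times> nat)) \<Rightarrow> nat set \<Rightarrow> nat \<Rightarrow> nat \<Rightarrow> bool" where
  "adj d m S u v \<longleftrightarrow> u \<in> S \<and> v \<in> S \<and> u \<noteq> v \<and> (\<exists>i<d. \<exists>j<d. m (u, i) = (v, j))"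

definition connected_induced :: "nat \<Rightarrow> ((nat \<times> nat) \<Rightarrow> (nat \<times> nat)) \<Rightarrow> nat set \<Rightarrow> bool" where
  "connected_induced d m S \<longleftrightarrow> (\<forall>u\<in>S. \<forall>v\<in>S. (adj d m S)\<^sup>*\<^sup>* u v)"

definition has_cycle :: "nat \<Rightarrow> ((nat \<times> nat) \<Rightarrow> (nat \<times> nat)) \<Rightarrow> nat set \<Rightarrow> bool" where
  "has_cycle d m S \<longleftrightarrow> (\<exists>xs. distinct xs \<and> length xs \<ge> 3 \<and> set xs \<subseteq> S \<and>
      (\<forall>i < length xs - 1. adj d m S (xs ! i) (xs ! Suc i)) \<and> adj d m S (last xs) (hd xs))"

definition is_tree :: "nat \<Rightarrow> ((nat \<times> nat) \<Rightarrow> (nat \<times> nat)) \<Rightarrow> nat set \<Rightarrow> bool" where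
  "is_tree d m S \<longleftrightarrow> connected_induced d m S \<and> \<not> has_cycle d m S \<and>
     \<not> has_loop d m S \<and> \<not> has_multi_edge d m S"

definition push_prob :: "nat \<Rightarrow> nat \<Rightarrow>
    (((nat \<times> nat) \<Rightarrow> (nat \<times> nat)) \<Rightarrow> (nat \<Rightarrow> nat) stream \<Rightarrow> bool) \<Rightarrow> real" where
  "push_prob n d P = measure (push_space n d) {x \<in> space (push_space n d). P (fst x) (snd x)}"

end

theory Submission
  imports Defs
begin

definition PMs :: "'a set \<Rightarrow> ('a \<Rightarrow> 'a) set" where
  "PMs A = {m. (\<forall>x\<in>A. m x \<in> A \<and> m x \<noteq> x \<and> m (m x) = x) \<and> (\<forall>x. x \<notin> A \<longrightarrow> m x = x)}"

lemma perfect_matchings_PMs: "perfect_matchings n d = PMs (clones n d)"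
  unfolding perfect_matchings_def PMs_def by simp

lemma finite_PMs:
  assumes "finite A" shows "finite (PMs A)"
proof -
  have "inj_on (\<lambda>m. restrict m A) (PMs A)"
  proof (rule inj_onI)
    fix m m' assume "m \<in> PMs A" "m' \<in> PMs A" "restrict m A = restrict m' A"
    then show "m = m'"
    proof (intro ext)
      fix z assume a: "m \<in> PMs A" "m' \<in> PMs A" "restrict m A = restrict m' A"
      show "m z = m' z"
      proof (cases "z \<in> A")
        case True
        then show ?thesis using fun_cong[OF a(3), of z] by simp
      next
        case False
        then show ?thesis using a unfolding PMs_def by auto
      qed
    qed
  qed
  moreover have "(\<lambda>m. restrict m A) ` PMs A \<subseteq> PiE A (\<lambda>_. A)"
    unfolding PMs_def by auto
  moreover have "finite (PiE A (\<lambda>_. A))" using assms by (simp add: finite_PiE)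
  ultimately show ?thesis by (meson finite_imageD finite_subset)
qed

lemma PMs_fix_bij:
  assumes xA: "x \<in> A" and yA: "y \<in> A" and xy: "x \<noteq> y"
    and Q1: "\<And>m. Q (m(x:=x, y:=y)) = Q m" and Q2: "\<And>m. Q (m(x:=y, y:=x)) = Q m"
  shows "bij_betw (\<lambda>m. m(x:=x, y:=y)) {m\<in>PMs A. m x = y \<and> Q m} {m\<in>PMs (A - {x,y}). Q m}"
proof (rule bij_betw_byWitness[where f' = "\<lambda>m. m(x:=y, y:=x)"])
  show "\<forall>a\<in>{m \<in> PMs A. m x = y \<and> Q m}. a(x := x, y := y, x := y, y := x) = a"
  proof
    fix m assume m: "m \<in> {m \<in> PMs A. m x = y \<and> Q m}"
    then have "m y = x" using xA unfolding PMs_def by auto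
    with m show "m(x := x, y := y, x := y, y := x) = m" by (auto simp: fun_eq_iff)
  qed
  show "\<forall>a'\<in>{m \<in> PMs (A - {x, y}). Q m}. a'(x := y, y := x, x := x, y := y) = a'"
    by (auto simp: fun_eq_iff PMs_def)
  show "(\<lambda>m. m(x := x, y := y)) ` {m \<in> PMs A. m x = y \<and> Q m} \<subseteq> {m \<in> PMs (A - {x, y}). Q m}"
  proof (rule image_subsetI)
    fix m assume "m \<in> {m \<in> PMs A. m x = y \<and> Q m}"
    then have m: "m \<in> PMs A" "m x = y" "Q m" by auto
    then have my: "m y = x" using xA unfolding PMs_def by auto
    have "Q (m(x := x, y := y))" using m Q1 by simp
    moreover have "m(x := x, y := y) \<in> PMs (A - {x, y})"
      unfolding PMs_def
    proof (intro CollectI conjI ballI allI impI)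
      fix z assume z: "z \<in> A - {x,y}"
      then have mz: "m z \<in> A" "m z \<noteq> z" "m (m z) = z" using m unfolding PMs_def by auto
      have "m z \<noteq> x" using m(2) z mz(3) by force
      moreover have "m z \<noteq> y" using my z mz(3) by force
      ultimately show "(m(x := x, y := y)) z \<in> A - {x, y}" "(m(x := x, y := y)) z \<noteq> z"
        "(m(x := x, y := y)) ((m(x := x, y := y)) z) = z" using z mz by auto
    next
      fix z assume "z \<notin> A - {x,y}"
      then show "(m(x := x, y := y)) z = z" using m unfolding PMs_def by auto
    qed
    ultimately show "m(x := x, y := y) \<in> {m \<in> PMs (A - {x, y}). Q m}" by simp
  qed
  show "(\<lambda>m. m(x := y, y := x)) ` {m \<in> PMs (A - {x, y}). Q m} \<subseteq> {m \<in> PMs A. m x = y \<and> Q m}"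
  proof (rule image_subsetI)
    fix m assume "m \<in> {m \<in> PMs (A - {x, y}). Q m}"
    then have m: "m \<in> PMs (A - {x,y})" "Q m" by auto
    have "Q (m(x := y, y := x))" using m Q2 by simp
    moreover have "m(x := y, y := x) \<in> PMs A"
      unfolding PMs_def
    proof (intro CollectI conjI ballI allI impI)
      fix z assume z: "z \<in> A"
      show "(m(x := y, y := x)) z \<in> A" "(m(x := y, y := x)) z \<noteq> z"
        "(m(x := y, y := x)) ((m(x := y, y := x)) z) = z"
        using z m(1) xy xA yA unfolding PMs_def by (auto split: if_splits)
    next
      fix z assume "z \<notin> A"
      then show "(m(x := y, y := x)) z = z" using m xA yA unfolding PMs_def by auto
    qed
    ultimately show "m(x := y, y := x) \<in> {m \<in> PMs A. m x = y \<and> Q m}" using xy by simp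
  qed
qed

fun pmc :: "nat \<Rightarrow> nat" where
  "pmc 0 = 1"
| "pmc (Suc 0) = 0"
| "pmc (Suc (Suc k)) = Suc k * pmc k"

lemma card_PMs: "finite A \<Longrightarrow> card (PMs A) = pmc (card A)"
proof (induction "card A" arbitrary: A rule: less_induct)
  case less
  show ?case
  proof (cases "A = {}")
    case True
    then have "PMs A = {id}" unfolding PMs_def by (auto simp: fun_eq_iff)
    then show ?thesis using True by simp
  next
    case False
    then obtain x where xA: "x \<in> A" by auto
    have split: "PMs A = (\<Union>y\<in>A - {x}. {m\<in>PMs A. m x = y \<and> True})"
      using xA unfolding PMs_def by auto
    have each: "card {m\<in>PMs A. m x = y \<and> True} = pmc (card A - 2)" if y: "y \<in> A - {x}" for y
    proof -
      have xny: "x \<noteq> y" using y by auto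
      have c: "card (A - {x,y}) = card A - 2" using xA y less.prems xny
        by (simp add: card_Diff_subset card_insert_if numeral_2_eq_2)
      have lt: "card (A - {x,y}) < card A" using c xA less.prems
        by (metis card_gt_0_iff diff_less empty_iff zero_less_numeral)
      have "card {m\<in>PMs A. m x = y \<and> True} = card {m\<in>PMs (A - {x,y}). True}"
        using PMs_fix_bij[of x A y "\<lambda>_. True"] xA y by (intro bij_betw_same_card) auto
      also have "\<dots> = pmc (card (A - {x,y}))"
        using less.hyps[OF lt] less.prems by simp
      finally show ?thesis using c by simp
    qed
    have "card (PMs A) = (\<Sum>y\<in>A - {x}. card {m\<in>PMs A. m x = y \<and> True})"
      apply (subst split)
      apply (rule card_UN_disjoint)
      using less.prems finite_PMs[OF less.prems] by auto
    also have "\<dots> = (card A - 1) * pmc (card A - 2)"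
      using each xA less.prems by simp
    also have "\<dots> = pmc (card A)"
    proof -
      obtain k where k: "card A = Suc k" using False less.prems
        by (cases "card A") auto
      show ?thesis by (cases k) (simp_all add: k)
    qed
    finally show ?thesis .
  qed
qed

lemma pmc_pos: "even k \<Longrightarrow> pmc k > 0"
  by (induction k rule: pmc.induct) auto

lemma pmc_grow: "real (pmc (M + 2 * k)) \<ge> real M ^ k * real (pmc M)"
proof (induction k)
  case 0 then show ?case by simp
next
  case (Suc k)
  have "pmc (M + 2 * Suc k) = Suc (M + 2*k) * pmc (M + 2 * k)"
    by (simp add: numeral_2_eq_2)
  then have "real (pmc (M + 2 * Suc k)) = real (Suc (M + 2*k)) * real (pmc (M + 2 * k))"
    by (metis of_nat_mult)
  also have "\<dots> \<ge> real M * (real M ^ k * real (pmc M))"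
    by (intro mult_mono Suc.IH) auto
  finally show ?case by (simp add: mult.assoc)
qed

definition pairs_clones :: "('a \<times> 'a) list \<Rightarrow> 'a list" where
  "pairs_clones ps = map fst ps @ map snd ps"

lemma card_PMs_pairs:
  assumes "finite A" "distinct (pairs_clones ps)" "set (pairs_clones ps) \<subseteq> A"
  shows "card {m\<in>PMs A. \<forall>p\<in>set ps. m (fst p) = snd p} = card (PMs (A - set (pairs_clones ps)))"
  using assms
proof (induction ps arbitrary: A)
  case Nil
  then show ?case by (simp add: pairs_clones_def)
next
  case (Cons p ps)
  obtain x y where p: "p = (x,y)" by (cases p)
  let ?Q = "\<lambda>m. \<forall>p\<in>set ps. m (fst p) = snd p"
  have xy: "x \<in> A" "y \<in> A" "x \<noteq> y" using Cons.prems p by (auto simp: pairs_clones_def)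
  have nx: "x \<notin> set (pairs_clones ps)" "y \<notin> set (pairs_clones ps)"
    using Cons.prems p by (auto simp: pairs_clones_def)
  have Q1: "?Q (m(x:=x, y:=y)) = ?Q m" for m
  proof -
    have "\<forall>q\<in>set ps. fst q \<noteq> x \<and> fst q \<noteq> y" using nx by (auto simp: pairs_clones_def)
    then show ?thesis by auto
  qed
  have Q2: "?Q (m(x:=y, y:=x)) = ?Q m" for m
  proof -
    have "\<forall>q\<in>set ps. fst q \<noteq> x \<and> fst q \<noteq> y" using nx by (auto simp: pairs_clones_def)
    then show ?thesis by auto
  qed
  have "{m\<in>PMs A. \<forall>q\<in>set (p#ps). m (fst q) = snd q} = {m\<in>PMs A. m x = y \<and> ?Q m}"
    using p by auto
  also have "card \<dots> = card {m\<in>PMs (A - {x,y}). ?Q m}"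
    by (rule bij_betw_same_card[OF PMs_fix_bij[OF xy Q1 Q2]])
  also have "\<dots> = card (PMs (A - {x,y} - set (pairs_clones ps)))"
    apply (rule Cons.IH)
    using Cons.prems p nx by (auto simp: pairs_clones_def)
  also have "A - {x,y} - set (pairs_clones ps) = A - set (pairs_clones (p#ps))"
    using p by (auto simp: pairs_clones_def)
  finally show ?case .
qed

lemma prob_PMs_pairs:
  assumes A: "finite A" "even (card A)" and ps: "distinct (pairs_clones ps)" "set (pairs_clones ps) \<subseteq> A"
    and k: "length ps = k" and lt: "2 * k < card A"
  shows "measure_pmf.prob (pmf_of_set (PMs A)) {m. \<forall>p\<in>set ps. m (fst p) = snd p}
          \<le> 1 / (real (card A) - 2 * real k) ^ k"
proof -
  have ne: "PMs A \<noteq> {}" using card_PMs[OF A(1)] pmc_pos[OF A(2)]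
    by (metis card.empty less_numeral_extra(3))
  have cps: "card (set (pairs_clones ps)) = 2 * k"
    using distinct_card[OF ps(1)] k by (simp add: pairs_clones_def)
  define M where "M = card A - 2 * k"
  have le: "2 * k \<le> card A" using ps cps A by (metis card_mono)
  have cardrest: "card (A - set (pairs_clones ps)) = M" unfolding M_def
    using cps ps A by (simp add: card_Diff_subset)
  have evM: "even M" using A le unfolding M_def by auto
  have cA: "card A = M + 2 * k" using le M_def by simp
  have "measure_pmf.prob (pmf_of_set (PMs A)) {m. \<forall>p\<in>set ps. m (fst p) = snd p}
       = real (card {m\<in>PMs A. \<forall>p\<in>set ps. m (fst p) = snd p}) / real (card (PMs A))"
    using ne finite_PMs[OF A(1)]
    by (simp add: measure_pmf_of_set Int_def conj_commute)
  also have "\<dots> = real (pmc M) / real (pmc (M + 2 * k))"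
    using card_PMs_pairs[OF A(1) ps] card_PMs[OF A(1)] card_PMs[of "A - set (pairs_clones ps)"] A(1) cardrest cA by simp
  also have "\<dots> \<le> real (pmc M) / (real M ^ k * real (pmc M))"
  proof -
    have "M > 0" using lt M_def by simp
    then have pos: "0 < real M ^ k * real (pmc M)" using pmc_pos[OF evM] by simp
    show ?thesis
      apply (rule divide_left_mono) using pmc_grow[of M k] pos by (auto intro: mult_pos_pos)
  qed
  also have "\<dots> = 1 / real M ^ k" using pmc_pos[OF evM] by simp
  also have "real M = real (card A) - 2 * real k" using le M_def by simp
  finally show ?thesis .
qed


type_synonym mt = "nat \<times> nat \<Rightarrow> nat \<times> nat"

fun chain :: "mt \<Rightarrow> (nat \<times> nat) list \<Rightarrow> bool" where
  "chain m [] = True"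
| "chain m [x] = True"
| "chain m (x # y # zs) = (fst y = fst (m x) \<and> y \<noteq> m x \<and> chain m (y # zs))"

lemma chain_append:
  "chain m (xs @ ys) \<longleftrightarrow> chain m xs \<and> chain m ys \<and>
     (xs \<noteq> [] \<and> ys \<noteq> [] \<longrightarrow> fst (hd ys) = fst (m (last xs)) \<and> hd ys \<noteq> m (last xs))"
proof (induction xs)
  case Nil then show ?case by simp
next
  case (Cons x xs)
  show ?case
  proof (cases xs)
    case Nil
    then show ?thesis by (cases ys) auto
  next
    case (Cons y zs)
    then show ?thesis using Cons.IH by auto
  qed
qed

definition badwalk :: "nat \<Rightarrow> nat \<Rightarrow> mt \<Rightarrow> (nat \<times> nat) list \<Rightarrow> bool" where
  "badwalk n d m xs \<longleftrightarrow> xs \<noteq> [] \<and> fst (hd xs) = 1 \<and> chain m xs \<and> distinct (map fst xs) \<and>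
     fst (m (last xs)) \<in> fst ` set xs \<and> set xs \<subseteq> clones n d"

definition good :: "nat \<Rightarrow> nat \<Rightarrow> nat \<Rightarrow> mt \<Rightarrow> bool" where
  "good n d K m \<longleftrightarrow> \<not> (\<exists>xs. badwalk n d m xs \<and> length xs \<le> 2 * K + 1)"

fun pchain :: "((nat \<times> nat) \<times> (nat \<times> nat)) list \<Rightarrow> bool" where
  "pchain [] = True"
| "pchain [p] = True"
| "pchain (p # q # r) = (fst (fst q) = fst (snd p) \<and> pchain (q # r))"

lemma pchain_snoc:
  "pchain (ps @ [q]) \<longleftrightarrow> pchain ps \<and> (ps \<noteq> [] \<longrightarrow> fst (fst q) = fst (snd (last ps)))"
proof (induction ps rule: pchain.induct)
  case 1 then show ?case by simp
next
  case (2 p) then show ?case by simp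
next
  case (3 p q' r) then show ?case by auto
qed

definition Pre :: "nat \<Rightarrow> nat \<Rightarrow> nat \<Rightarrow> ((nat \<times> nat) \<times> (nat \<times> nat)) list set" where
  "Pre n d j = {ps. length ps = j \<and> (ps \<noteq> [] \<longrightarrow> fst (fst (hd ps)) = 1) \<and> pchain ps \<and>
     (\<forall>p\<in>set ps. fst p \<in> clones n d \<and> snd p \<in> clones n d)}"

definition Cand :: "nat \<Rightarrow> nat \<Rightarrow> nat \<Rightarrow> ((nat \<times> nat) \<times> (nat \<times> nat)) list set" where
  "Cand n d k = {ps \<in> Pre n d k. ps \<noteq> [] \<and> fst (snd (last ps)) \<in> fst ` fst ` set ps}"

lemma finite_clones: "finite (clones n d)"
  unfolding clones_def by simp

lemma card_clones: "card (clones n d) = n * d"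
  unfolding clones_def by (simp add: card_cartesian_product)

lemma finite_Pre: "finite (Pre n d j)"
proof -
  have "Pre n d j \<subseteq> {xs. set xs \<subseteq> clones n d \<times> clones n d \<and> length xs = j}"
    unfolding Pre_def by (auto simp: mem_Times_iff)
  then show ?thesis
    by (rule finite_subset) (intro finite_lists_length_eq finite_cartesian_product finite_clones)
qed

definition vtx :: "((nat \<times> nat) \<times> (nat \<times> nat)) list \<Rightarrow> nat" where
  "vtx ps = (if ps = [] then 1 else fst (snd (last ps)))"

lemma butlast_Pre:
  assumes "ps \<in> Pre n d (Suc j)"
  shows "butlast ps \<in> Pre n d j" "ps = butlast ps @ [last ps]"
    "fst (fst (last ps)) = vtx (butlast ps)" "snd (fst (last ps)) < d" "snd (last ps) \<in> clones n d"
proof -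
  have ne: "ps \<noteq> []" using assms unfolding Pre_def by auto
  show eq: "ps = butlast ps @ [last ps]" using ne by simp
  have pc: "pchain (butlast ps @ [last ps])" using assms eq unfolding Pre_def by auto
  have lastin: "last ps \<in> set ps" using ne by simp
  show "butlast ps \<in> Pre n d j"
    unfolding Pre_def
  proof (intro CollectI conjI impI ballI)
    show "length (butlast ps) = j" using assms unfolding Pre_def by simp
    show "pchain (butlast ps)" using pc pchain_snoc by blast
    fix p assume "p \<in> set (butlast ps)"
    then have "p \<in> set ps" by (meson in_set_butlastD)
    then show "fst p \<in> clones n d" "snd p \<in> clones n d" using assms unfolding Pre_def by auto
  next
    assume "butlast ps \<noteq> []"
    then have "hd (butlast ps) = hd ps" using eq by (metis hd_append2)
    then show "fst (fst (hd (butlast ps))) = 1" using assms ne unfolding Pre_def by auto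
  qed
  show "fst (fst (last ps)) = vtx (butlast ps)"
  proof (cases "butlast ps = []")
    case True
    then have "last ps = hd ps" using eq by (metis append_Nil list.sel(1))
    then show ?thesis using True assms ne unfolding Pre_def vtx_def by auto
  next
    case False
    then show ?thesis using pc pchain_snoc[of "butlast ps" "last ps"] unfolding vtx_def by auto
  qed
  show "snd (fst (last ps)) < d" "snd (last ps) \<in> clones n d"
    using assms lastin unfolding Pre_def clones_def by auto
qed

lemma card_Pre: "card (Pre n d j) \<le> (d * (n * d)) ^ j"
proof (induction j)
  case 0
  have "Pre n d 0 = {[]}" unfolding Pre_def by auto
  then show ?case by simp
next
  case (Suc j)
  define g where "g = (\<lambda>(ps :: ((nat \<times> nat) \<times> (nat \<times> nat)) list, i :: nat, y :: nat \<times> nat).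
     ps @ [((vtx ps, i), y)])"
  have "Pre n d (Suc j) \<subseteq> g ` (Pre n d j \<times> {..<d} \<times> clones n d)"
  proof
    fix ps assume ps: "ps \<in> Pre n d (Suc j)"
    note b = butlast_Pre[OF ps]
    have "ps = g (butlast ps, snd (fst (last ps)), snd (last ps))"
      unfolding g_def using b(2,3) by (metis (no_types, lifting) case_prod_conv prod.collapse)
    then show "ps \<in> g ` (Pre n d j \<times> {..<d} \<times> clones n d)"
      using b by blast
  qed
  then have "card (Pre n d (Suc j)) \<le> card (g ` (Pre n d j \<times> {..<d} \<times> clones n d))"
    by (intro card_mono finite_imageI finite_cartesian_product finite_Pre finite_clones) auto
  also have "\<dots> \<le> card (Pre n d j \<times> {..<d} \<times> clones n d)"
    by (intro card_image_le finite_cartesian_product finite_Pre finite_clones) auto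
  also have "\<dots> = card (Pre n d j) * (d * (n * d))"
    by (simp add: card_cartesian_product card_clones)
  also have "\<dots> \<le> (d * (n * d)) ^ j * (d * (n * d))"
    using Suc.IH by simp
  finally show ?case by (simp add: mult.commute)
qed

lemma card_Cand: "card (Cand n d (Suc j)) \<le> (d * (n * d)) ^ j * (d * Suc j * d)"
proof -
  define h where "h = (\<lambda>(ps :: ((nat \<times> nat) \<times> (nat \<times> nat)) list, i :: nat, a :: nat, c :: nat).
     ps @ [((vtx ps, i), (fst ((map fst ps @ [(vtx ps, i)]) ! a), c))])"
  have "Cand n d (Suc j) \<subseteq> h ` (Pre n d j \<times> {..<d} \<times> {..<Suc j} \<times> {..<d})"
  proof
    fix ps assume ps: "ps \<in> Cand n d (Suc j)"
    then have psP: "ps \<in> Pre n d (Suc j)" unfolding Cand_def by auto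
    note b = butlast_Pre[OF psP]
    have "fst (snd (last ps)) \<in> fst ` fst ` set ps" using ps unfolding Cand_def by auto
    then have "fst (snd (last ps)) \<in> set (map fst (map fst ps))" by (simp only: set_map)
    then obtain a where a: "a < length ps" "fst (snd (last ps)) = fst (map fst ps ! a)"
      by (auto simp: in_set_conv_nth)
    have len: "length ps = Suc j" using psP unfolding Pre_def by simp
    have mf: "map fst ps = map fst (butlast ps) @ [(vtx (butlast ps), snd (fst (last ps)))]"
      using b(2,3) by (metis list.simps(8,9) map_append prod.collapse)
    have sc: "snd (last ps) = (fst ((map fst (butlast ps) @ [(vtx (butlast ps), snd (fst (last ps)))]) ! a), snd (snd (last ps)))"
      using a mf by (metis prod.collapse)
    have "snd (snd (last ps)) < d" using b(5) unfolding clones_def by auto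
    moreover have "ps = h (butlast ps, snd (fst (last ps)), a, snd (snd (last ps)))"
      unfolding h_def using b(2,3) sc by (metis (no_types, lifting) case_prod_conv prod.collapse)
    ultimately show "ps \<in> h ` (Pre n d j \<times> {..<d} \<times> {..<Suc j} \<times> {..<d})"
      using b a len by force
  qed
  then have "card (Cand n d (Suc j)) \<le> card (h ` (Pre n d j \<times> {..<d} \<times> {..<Suc j} \<times> {..<d}))"
    by (intro card_mono finite_imageI finite_cartesian_product finite_Pre) auto
  also have "\<dots> \<le> card (Pre n d j \<times> {..<d} \<times> {..<Suc j} \<times> {..<d})"
    by (intro card_image_le finite_cartesian_product finite_Pre) auto
  also have "\<dots> = card (Pre n d j) * (d * Suc j * d)"
    by (simp add: card_cartesian_product)
  also have "\<dots> \<le> (d * (n * d)) ^ j * (d * Suc j * d)"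
    using card_Pre by simp
  finally show ?thesis .
qed

lemma chain_nth:
  "chain m xs \<Longrightarrow> Suc i < length xs \<Longrightarrow> fst (xs ! Suc i) = fst (m (xs ! i)) \<and> xs ! Suc i \<noteq> m (xs ! i)"
proof (induction m xs arbitrary: i rule: chain.induct)
  case (3 m x y zs)
  then show ?case by (cases i) auto
qed auto

lemma chain_pchain: "chain m xs \<Longrightarrow> pchain (map (\<lambda>x. (x, m x)) xs)"
  by (induction m xs rule: chain.induct) auto

lemma PMs_inj: "m \<in> PMs A \<Longrightarrow> inj_on m A"
proof (rule inj_onI)
  fix x y assume "m \<in> PMs A" "x \<in> A" "y \<in> A" "m x = m y"
  then have a: "\<forall>z\<in>A. m (m z) = z" unfolding PMs_def by blast
  have "x = m (m x)" using a \<open>x \<in> A\<close> by simp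
  also have "\<dots> = m (m y)" using \<open>m x = m y\<close> by simp
  also have "\<dots> = y" using a \<open>y \<in> A\<close> by simp
  finally show "x = y" .
qed

lemma badwalk_cand:
  assumes m: "m \<in> PMs (clones n d)" and bw: "badwalk n d m xs"
  defines "ps \<equiv> map (\<lambda>x. (x, m x)) xs"
  shows "ps \<in> Cand n d (length xs)" "distinct (pairs_clones ps)" "\<forall>p\<in>set ps. m (fst p) = snd p"
proof -
  have ne: "xs \<noteq> []" and h1: "fst (hd xs) = 1" and ch: "chain m xs" and dv: "distinct (map fst xs)"
    and fin: "fst (m (last xs)) \<in> fst ` set xs" and cl: "set xs \<subseteq> clones n d"
    using bw unfolding badwalk_def by auto
  have mcl: "m x \<in> clones n d" "m (m x) = x" "m x \<noteq> x" if "x \<in> clones n d" for x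
    using m that unfolding PMs_def by auto
  show "\<forall>p\<in>set ps. m (fst p) = snd p" unfolding ps_def by auto
  show "ps \<in> Cand n d (length xs)"
    unfolding Cand_def Pre_def ps_def
  proof (intro CollectI conjI impI ballI)
    show "pchain (map (\<lambda>x. (x, m x)) xs)" using chain_pchain[OF ch] .
    show "fst (fst (hd (map (\<lambda>x. (x, m x)) xs))) = 1" using ne h1 by (simp add: hd_map)
    show "fst (snd (last (map (\<lambda>x. (x, m x)) xs))) \<in> fst ` fst ` set (map (\<lambda>x. (x, m x)) xs)"
      using fin ne by (simp add: last_map image_image)
  qed (use ne cl mcl in auto)
  have dxs: "distinct xs" using dv by (simp add: distinct_map)
  have inj: "inj_on m (set xs)" using PMs_inj[OF m] cl by (meson inj_on_subset)
  have disj: "m (xs ! s) \<noteq> xs ! t" if st: "s < length xs" "t < length xs" for s t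
  proof
    assume eq: "m (xs ! s) = xs ! t"
    have nl: False if "Suc a < length xs" "m (xs ! a) = xs ! b" "b < length xs" for a b
    proof -
      have c: "fst (xs ! Suc a) = fst (m (xs ! a))" "xs ! Suc a \<noteq> m (xs ! a)"
        using chain_nth[OF ch that(1)] by auto
      then have "fst (xs ! Suc a) = fst (xs ! b)" using that by simp
      then have "Suc a = b"
      proof -
        assume f: "fst (xs ! Suc a) = fst (xs ! b)"
        have "map fst xs ! Suc a = map fst xs ! b" using f that by simp
        then show "Suc a = b" using dv that nth_eq_iff_index_eq[of "map fst xs" "Suc a" b] by simp
      qed
      then show False using c that by simp
    qed
    show False
    proof (cases "Suc s < length xs")
      case True then show False using nl eq st by blast
    next
      case False
      have xsin: "xs ! s \<in> clones n d" "xs ! t \<in> clones n d" using cl st by auto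
      have bk: "m (xs ! t) = xs ! s" using eq mcl(2)[OF xsin(1)] by metis
      show False
      proof (cases "Suc t < length xs")
        case True then show False using nl bk st by blast
      next
        case False
        then have "t = s" using \<open>\<not> Suc s < length xs\<close> st by simp
        then show False using eq mcl(3)[OF xsin(1)] by simp
      qed
    qed
  qed
  show "distinct (pairs_clones ps)"
    unfolding pairs_clones_def ps_def
  proof -
    have "distinct (map m xs)" using dxs inj by (simp add: distinct_map)
    moreover have "set xs \<inter> set (map m xs) = {}"
    proof (rule ccontr)
      assume "set xs \<inter> set (map m xs) \<noteq> {}"
      then obtain y where "y \<in> set xs" "y \<in> set (map m xs)" by blast
      then obtain s t where "s < length xs" "t < length xs" "y = xs ! t" "y = m (xs ! s)"
        by (auto simp: in_set_conv_nth)
      then show False using disj[of s t] by simp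
    qed
    ultimately show "distinct (map fst (map (\<lambda>x. (x, m x)) xs) @ map snd (map (\<lambda>x. (x, m x)) xs))"
      using dxs by (simp add: o_def)
  qed
qed

lemma config_pmf_set:
  assumes "even (n * d)"
  shows "set_pmf (config_pmf n d) = PMs (clones n d)" "finite (PMs (clones n d))" "PMs (clones n d) \<noteq> {}"
proof -
  show f: "finite (PMs (clones n d))" by (rule finite_PMs[OF finite_clones])
  show ne: "PMs (clones n d) \<noteq> {}"
    using card_PMs[OF finite_clones, of n d] pmc_pos[of "n * d"] assms card_clones[of n d]
    by (metis card.empty less_numeral_extra(3))
  show "set_pmf (config_pmf n d) = PMs (clones n d)"
    unfolding config_pmf_def perfect_matchings_PMs using f ne by simp
qed

lemma prob_not_good:
  assumes ev: "even (n * d)" and big: "2 * (2 * K + 1) < n * d"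
  shows "measure_pmf.prob (config_pmf n d) {m. \<not> good n d K m}
     \<le> (\<Sum>k\<in>{1..2*K+1}. real (card (Cand n d k)) / (real (n * d) - 2 * real k) ^ k)"
proof -
  note cs = config_pmf_set[OF ev]
  define E where "E = (\<lambda>ps :: ((nat \<times> nat) \<times> (nat \<times> nat)) list. {m. \<forall>p\<in>set ps. m (fst p) = snd p})"
  define D where "D = (\<lambda>k. {ps \<in> Cand n d k. distinct (pairs_clones ps)})"
  have sub: "{m. \<not> good n d K m} \<inter> set_pmf (config_pmf n d) \<subseteq> (\<Union>k\<in>{1..2*K+1}. \<Union>ps\<in>D k. E ps)"
  proof
    fix m assume "m \<in> {m. \<not> good n d K m} \<inter> set_pmf (config_pmf n d)"
    then have m: "m \<in> PMs (clones n d)" and ng: "\<not> good n d K m" using cs by auto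
    then obtain xs where xs: "badwalk n d m xs" "length xs \<le> 2 * K + 1" unfolding good_def by auto
    have "length xs \<ge> 1" using xs unfolding badwalk_def by (cases xs) auto
    moreover have "map (\<lambda>x. (x, m x)) xs \<in> D (length xs)"
      using badwalk_cand[OF m xs(1)] unfolding D_def by auto
    moreover have "m \<in> E (map (\<lambda>x. (x, m x)) xs)"
      using badwalk_cand[OF m xs(1)] unfolding E_def by auto
    ultimately show "m \<in> (\<Union>k\<in>{1..2*K+1}. \<Union>ps\<in>D k. E ps)"
      using xs(2) by auto
  qed
  have finD: "finite (D k)" for k
    unfolding D_def Cand_def using finite_Pre by simp
  have "measure_pmf.prob (config_pmf n d) {m. \<not> good n d K m}
      = measure_pmf.prob (config_pmf n d) ({m. \<not> good n d K m} \<inter> set_pmf (config_pmf n d))"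
    by (simp add: measure_Int_set_pmf)
  also have "\<dots> \<le> measure_pmf.prob (config_pmf n d) (\<Union>k\<in>{1..2*K+1}. \<Union>ps\<in>D k. E ps)"
    by (intro measure_pmf.finite_measure_mono sub) auto
  also have "\<dots> \<le> (\<Sum>k\<in>{1..2*K+1}. measure_pmf.prob (config_pmf n d) (\<Union>ps\<in>D k. E ps))"
    by (intro measure_UNION_le) auto
  also have "\<dots> \<le> (\<Sum>k\<in>{1..2*K+1}. \<Sum>ps\<in>D k. measure_pmf.prob (config_pmf n d) (E ps))"
    by (intro sum_mono measure_UNION_le finD) auto
  also have "\<dots> \<le> (\<Sum>k\<in>{1..2*K+1}. \<Sum>ps\<in>D k. 1 / (real (n * d) - 2 * real k) ^ k)"
  proof (intro sum_mono)
    fix k ps assume k: "k \<in> {1..2*K+1}" and ps: "ps \<in> D k"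
    have l: "length ps = k" using ps unfolding D_def Cand_def Pre_def by auto
    have sub: "set (pairs_clones ps) \<subseteq> clones n d"
      using ps unfolding D_def Cand_def Pre_def pairs_clones_def by auto
    show "measure_pmf.prob (config_pmf n d) (E ps) \<le> 1 / (real (n * d) - 2 * real k) ^ k"
      using prob_PMs_pairs[OF finite_clones, of n d ps k] ev sub l k big ps
      unfolding E_def config_pmf_def perfect_matchings_PMs D_def card_clones by auto
  qed
  also have "\<dots> = (\<Sum>k\<in>{1..2*K+1}. real (card (D k)) / (real (n * d) - 2 * real k) ^ k)"
    by simp
  also have "\<dots> \<le> (\<Sum>k\<in>{1..2*K+1}. real (card (Cand n d k)) / (real (n * d) - 2 * real k) ^ k)"
  proof (intro sum_mono divide_right_mono)
    fix k assume k: "k \<in> {1..2*K+1}"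
    show "real (card (D k)) \<le> real (card (Cand n d k))"
      unfolding D_def using finite_Pre[of n d k] unfolding Cand_def
      by (intro of_nat_mono card_mono) auto
    show "0 \<le> (real (n * d) - 2 * real k) ^ k" using k big
      by (intro zero_le_power) (auto simp del: of_nat_mult)
  qed
  finally show ?thesis .
qed


definition tinv :: "nat \<Rightarrow> nat \<Rightarrow> mt \<Rightarrow> nat set \<Rightarrow> nat \<Rightarrow> (nat \<Rightarrow> nat) \<Rightarrow> (nat \<Rightarrow> nat) \<Rightarrow> (nat \<Rightarrow> nat) \<Rightarrow> bool" where
  "tinv n d m S B par pc dep \<longleftrightarrow> finite S \<and> 1 \<in> S \<and> S \<subseteq> {1..n} \<and> dep 1 = 0 \<and> (\<forall>w\<in>S. dep w \<le> B) \<and>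
     (\<forall>w\<in>S - {1}. par w \<in> S \<and> pc w < d \<and> fst (m (w, pc w)) = par w \<and> dep (par w) < dep w)"

fun upf :: "mt \<Rightarrow> (nat \<Rightarrow> nat) \<Rightarrow> (nat \<Rightarrow> nat) \<Rightarrow> nat \<Rightarrow> nat \<Rightarrow> (nat \<times> nat) list" where
  "upf m par pc 0 w = []"
| "upf m par pc (Suc f) w = (if w = 1 then [] else upf m par pc f (par w) @ [m (w, pc w)])"

fun climbf :: "mt \<Rightarrow> (nat \<Rightarrow> nat) \<Rightarrow> (nat \<Rightarrow> nat) \<Rightarrow> nat set \<Rightarrow> nat \<Rightarrow> nat \<Rightarrow> (nat \<times> nat) list" where
  "climbf m par pc V 0 a = []"
| "climbf m par pc V (Suc f) a = (if par a \<in> V then [(a, pc a)] else (a, pc a) # climbf m par pc V f (par a))"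

locale tctx =
  fixes n d :: nat and m :: mt and S :: "nat set" and B :: nat and par pc dep :: "nat \<Rightarrow> nat"
  assumes pm: "m \<in> PMs (clones n d)" and ti: "tinv n d m S B par pc dep"
begin

lemma mcl: assumes "x \<in> clones n d" shows "m x \<in> clones n d" "m (m x) = x" "m x \<noteq> x"
  using pm assms unfolding PMs_def by auto

lemma tin: "finite S" "1 \<in> S" "S \<subseteq> {1..n}" "dep 1 = 0" "\<And>w. w \<in> S \<Longrightarrow> dep w \<le> B"
  using ti unfolding tinv_def by auto

lemma tpar: assumes "w \<in> S" "w \<noteq> 1"
  shows "par w \<in> S" "pc w < d" "fst (m (w, pc w)) = par w" "dep (par w) < dep w"
  using ti assms unfolding tinv_def by auto

lemma Scl: "w \<in> S \<Longrightarrow> i < d \<Longrightarrow> (w, i) \<in> clones n d"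
  using tin(3) unfolding clones_def by auto

lemma mpar: assumes "w \<in> S" "w \<noteq> 1" shows "m (w, pc w) = (par w, snd (m (w, pc w)))"
  using tpar[OF assms] by (metis prod.collapse)

lemma par_ne: assumes "w \<in> S" "w \<noteq> 1" shows "par w \<noteq> w"
  using tpar[OF assms] by auto

lemma no_pp: assumes "w \<in> S" "w \<noteq> 1" "par w \<noteq> 1" shows "m (w, pc w) \<noteq> (par w, pc (par w))"
proof
  assume eq: "m (w, pc w) = (par w, pc (par w))"
  have "m (par w, pc (par w)) = (w, pc w)" using eq mcl(2)[OF Scl[OF assms(1) tpar(2)[OF assms(1,2)]]] by simp
  then have "par (par w) = w" using tpar[OF tpar(1)[OF assms(1,2)] assms(3)] by simp
  then show False using tpar(4)[OF assms(1,2)] tpar(4)[OF tpar(1)[OF assms(1,2)] assms(3)] by simp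
qed

lemma upf_props:
  assumes "w \<in> S" "dep w \<le> f"
  shows "(w = 1 \<longrightarrow> upf m par pc f w = []) \<and>
    (w \<noteq> 1 \<longrightarrow> upf m par pc f w \<noteq> [] \<and> fst (hd (upf m par pc f w)) = 1 \<and> last (upf m par pc f w) = m (w, pc w)) \<and>
    chain m (upf m par pc f w) \<and> distinct (map fst (upf m par pc f w)) \<and>
    (\<forall>x\<in>set (upf m par pc f w). fst x \<in> S \<and> dep (fst x) < dep w) \<and>
    length (upf m par pc f w) \<le> dep w \<and> set (upf m par pc f w) \<subseteq> clones n d"
  using assms
proof (induction f arbitrary: w)
  case 0
  then show ?case using tpar(4)[of w] by (cases "w = 1") auto
next
  case (Suc f)
  show ?case
  proof (cases "w = 1")
    case True then show ?thesis by simp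
  next
    case w1: False
    note tp = tpar[OF Suc.prems(1) w1]
    have df: "dep (par w) \<le> f" using tp(4) Suc.prems by simp
    note IH = Suc.IH[OF tp(1) df]
    define U where "U = upf m par pc f (par w)"
    have eq: "upf m par pc (Suc f) w = U @ [m (w, pc w)]" using w1 U_def by simp
    have wcl: "(w, pc w) \<in> clones n d" using Scl[OF Suc.prems(1) tp(2)] .
    have ch: "chain m (U @ [m (w, pc w)])"
    proof (cases "par w = 1")
      case True then show ?thesis using IH U_def by simp
    next
      case False
      have l: "last U = m (par w, pc (par w))" "U \<noteq> []" using IH False U_def by auto
      have pcl: "(par w, pc (par w)) \<in> clones n d" using Scl[OF tp(1) tpar(2)[OF tp(1) False]] .
      have "m (last U) = (par w, pc (par w))" using l mcl(2)[OF pcl] by simp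
      moreover have "m (w, pc w) \<noteq> (par w, pc (par w))" using no_pp[OF Suc.prems(1) w1 False] .
      ultimately show ?thesis using IH U_def tp(3) l by (simp add: chain_append)
    qed
    have hd1: "fst (hd (U @ [m (w, pc w)])) = 1"
      using IH U_def tp(3) by (cases "par w = 1") auto
    have dis: "distinct (map fst (U @ [m (w, pc w)]))"
    proof -
      have "par w \<notin> fst ` set U" using IH U_def by auto
      then show ?thesis using IH U_def tp(3) by simp
    qed
    have el: "\<forall>x\<in>set (U @ [m (w, pc w)]). fst x \<in> S \<and> dep (fst x) < dep w"
    proof
      fix x assume "x \<in> set (U @ [m (w, pc w)])"
      then consider "x \<in> set U" | "x = m (w, pc w)" by auto
      then show "fst x \<in> S \<and> dep (fst x) < dep w"
      proof cases
        case 1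
        then have "fst x \<in> S" "dep (fst x) < dep (par w)" using IH U_def by auto
        then show ?thesis using tp(4) by simp
      next
        case 2
        then show ?thesis using tp by simp
      qed
    qed
    have len: "length (U @ [m (w, pc w)]) \<le> dep w" using IH U_def tp(4) by simp
    have cl: "set (U @ [m (w, pc w)]) \<subseteq> clones n d" using IH U_def mcl(1)[OF wcl] by auto
    show ?thesis unfolding eq using w1 ch hd1 dis el len cl by simp
  qed
qed

lemma climbf_props:
  assumes "a \<in> S" "a \<notin> V" "1 \<in> V" "dep a \<le> f"
  shows "climbf m par pc V f a \<noteq> [] \<and> hd (climbf m par pc V f a) = (a, pc a) \<and>
    chain m (climbf m par pc V f a) \<and> distinct (map fst (climbf m par pc V f a)) \<and>
    (\<forall>y\<in>set (climbf m par pc V f a). fst y \<in> S \<and> fst y \<notin> V \<and> dep (fst y) \<le> dep a) \<and>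
    fst (m (last (climbf m par pc V f a))) \<in> V \<and> length (climbf m par pc V f a) \<le> dep a \<and>
    set (climbf m par pc V f a) \<subseteq> clones n d"
  using assms
proof (induction f arbitrary: a)
  case 0
  have "a \<noteq> 1" using 0 by auto
  then show ?case using tpar(4)[OF 0(1)] 0 by simp
next
  case (Suc f)
  have a1: "a \<noteq> 1" using Suc.prems by auto
  note tp = tpar[OF Suc.prems(1) a1]
  have acl: "(a, pc a) \<in> clones n d" using Scl[OF Suc.prems(1) tp(2)] .
  show ?case
  proof (cases "par a \<in> V")
    case True
    then show ?thesis using tp Suc.prems acl by simp
  next
    case False
    have df: "dep (par a) \<le> f" using tp(4) Suc.prems by simp
    note IH = Suc.IH[OF tp(1) False Suc.prems(3) df]
    define R where "R = climbf m par pc V f (par a)"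
    have eq: "climbf m par pc V (Suc f) a = (a, pc a) # R" using False R_def by simp
    have p1: "par a \<noteq> 1" using False Suc.prems by auto
    have ch: "chain m ((a, pc a) # R)"
    proof -
      have "R \<noteq> []" using IH R_def by simp
      then obtain r rs where "R = r # rs" by (meson neq_Nil_conv)
      moreover have "r = (par a, pc (par a))"
      proof -
        have "hd R = (par a, pc (par a))" using IH R_def by simp
        then show ?thesis using \<open>R = r # rs\<close> by simp
      qed
      moreover have "m (a, pc a) \<noteq> (par a, pc (par a))" using no_pp[OF Suc.prems(1) a1 p1] .
      ultimately show ?thesis using IH R_def tp(3) by auto
    qed
    have nin: "a \<notin> fst ` set R"
    proof
      assume "a \<in> fst ` set R"
      then obtain y where "y \<in> set R" "fst y = a" by auto
      then have "dep a \<le> dep (par a)" using IH R_def by auto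
      then show False using tp(4) by simp
    qed
    have dis: "distinct (map fst ((a, pc a) # R))"
      using IH R_def nin by simp
    have el: "\<forall>y\<in>set ((a, pc a) # R). fst y \<in> S \<and> fst y \<notin> V \<and> dep (fst y) \<le> dep a"
    proof
      fix y assume "y \<in> set ((a, pc a) # R)"
      then consider "y = (a, pc a)" | "y \<in> set R" by auto
      then show "fst y \<in> S \<and> fst y \<notin> V \<and> dep (fst y) \<le> dep a"
      proof cases
        case 1 then show ?thesis using Suc.prems by simp
      next
        case 2
        then have "fst y \<in> S" "fst y \<notin> V" "dep (fst y) \<le> dep (par a)" using IH R_def by auto
        then show ?thesis using tp(4) by simp
      qed
    qed
    have lst: "fst (m (last ((a, pc a) # R))) \<in> V" using IH R_def by simp
    have len: "length ((a, pc a) # R) \<le> dep a" using IH R_def tp(4) by simp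
    have cl: "set ((a, pc a) # R) \<subseteq> clones n d" using IH R_def acl by simp
    show ?thesis unfolding eq using ch dis el lst len cl IH R_def by simp
  qed
qed

lemma internal:
  assumes gd: "good n d K m" and BK: "B \<le> K" and v: "v \<in> S" and i: "i < d" and mv: "m (v, i) = (u, j)"
    and u: "u \<in> S" and nv: "\<not> (v \<noteq> 1 \<and> i = pc v)" and nu: "\<not> (u \<noteq> 1 \<and> j = pc u)"
  shows False
proof -
  define U where "U = upf m par pc (dep v) v"
  define W1 where "W1 = U @ [(v, i)]"
  define V where "V = fst ` set W1"
  note up = upf_props[OF v order_refl, folded U_def]
  have vcl: "(v, i) \<in> clones n d" using Scl[OF v i] .
  have W1ne: "W1 \<noteq> []" unfolding W1_def by simp
  have W1hd: "fst (hd W1) = 1"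
    using up unfolding W1_def by (cases "v = 1") auto
  have W1ch: "chain m W1"
  proof (cases "v = 1")
    case True then show ?thesis using up unfolding W1_def by simp
  next
    case False
    have pcl: "(v, pc v) \<in> clones n d" using Scl[OF v tpar(2)[OF v False]] .
    have "m (last U) = (v, pc v)" using up False mcl(2)[OF pcl] by simp
    moreover have "i \<noteq> pc v" using nv False by simp
    ultimately show ?thesis using up False unfolding W1_def by (simp add: chain_append)
  qed
  have W1dis: "distinct (map fst W1)"
  proof -
    have "v \<notin> fst ` set U" using up by auto
    then show ?thesis using up unfolding W1_def by simp
  qed
  have W1cl: "set W1 \<subseteq> clones n d" using up vcl unfolding W1_def by simp
  have W1len: "length W1 \<le> dep v + 1" using up unfolding W1_def by simp
  have W1last: "m (last W1) = (u, j)" using mv unfolding W1_def by simp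
  have dvB: "dep v \<le> B" "dep u \<le> B" using tin(5) v u by auto
  show False
  proof (cases "u \<in> V")
    case True
    have "badwalk n d m W1" unfolding badwalk_def
      using W1ne W1hd W1ch W1dis W1cl W1last True V_def by simp
    moreover have "length W1 \<le> 2 * K + 1" using W1len dvB BK by simp
    ultimately show False using gd unfolding good_def by blast
  next
    case False
    have oneV: "1 \<in> V" using W1hd W1ne unfolding V_def by (metis hd_in_set image_eqI)
    define C where "C = climbf m par pc V (dep u) u"
    note cp = climbf_props[OF u False oneV order_refl, folded C_def]
    have c: "C \<noteq> []" "hd C = (u, pc u)" "chain m C" "distinct (map fst C)"
      "\<forall>y\<in>set C. fst y \<in> S \<and> fst y \<notin> V \<and> dep (fst y) \<le> dep u"
      "fst (m (last C)) \<in> V" "length C \<le> dep u" "set C \<subseteq> clones n d"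
      using cp by blast+
    have u1: "u \<noteq> 1" using False oneV by auto
    have jn: "j \<noteq> pc u" using nu u1 by simp
    have "fst (hd C) = fst (m (last W1))" "hd C \<noteq> m (last W1)"
      using c(2) W1last jn by auto
    then have Wch: "chain m (W1 @ C)"
      using W1ch c(1,3) W1ne chain_append[of m W1 C] by blast
    have "\<forall>y\<in>set C. fst y \<notin> fst ` set W1" using c(5) V_def by simp
    then have "fst ` set W1 \<inter> fst ` set C = {}" by force
    then have Wdis: "distinct (map fst (W1 @ C))"
      using W1dis c(4) by simp
    have Whd: "fst (hd (W1 @ C)) = 1" using W1hd W1ne by simp
    have "last (W1 @ C) = last C" using c(1) by simp
    moreover have "fst (m (last C)) \<in> fst ` set (W1 @ C)"
      using c(6) V_def by auto
    ultimately have Wlast: "fst (m (last (W1 @ C))) \<in> fst ` set (W1 @ C)"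
      by simp
    have Wcl: "set (W1 @ C) \<subseteq> clones n d" using W1cl c(8) by simp
    have "badwalk n d m (W1 @ C)" unfolding badwalk_def
      using Wch Wdis Whd Wlast Wcl W1ne by simp
    moreover have "length (W1 @ C) \<le> 2 * K + 1" using W1len c(7) dvB BK by simp
    ultimately show False using gd unfolding good_def by blast
  qed
qed

end


lemma card_ge2: assumes "card A \<ge> 2" shows "\<exists>a b. a \<in> A \<and> b \<in> A \<and> a \<noteq> b"
proof -
  have fin: "finite A" using assms by (metis card.infinite not_numeral_le_zero)
  have "A \<noteq> {}" using assms by auto
  then obtain a where a: "a \<in> A" by auto
  have "card (A - {a}) \<ge> 1" using assms fin a by (simp add: card_Diff_singleton)
  then have "A - {a} \<noteq> {}" by (metis card.empty not_one_le_zero)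
  then obtain b where "b \<in> A - {a}" by auto
  then show ?thesis using a by auto
qed

context tctx
begin

lemma adj_par:
  assumes gd: "good n d K m" and BK: "B \<le> K" and v: "v \<in> S" and i: "i < d" and u: "u \<in> S"
    and mv: "fst (m (v, i)) = u"
  shows "(v \<noteq> 1 \<and> par v = u \<and> i = pc v) \<or> (u \<noteq> 1 \<and> par u = v \<and> m (u, pc u) = (v, i))"
proof -
  obtain j where mvj: "m (v, i) = (u, j)" using mv by (metis prod.collapse)
  have "(v \<noteq> 1 \<and> i = pc v) \<or> (u \<noteq> 1 \<and> j = pc u)"
    using internal[OF gd BK v i mvj u] by blast
  then show ?thesis
  proof
    assume "v \<noteq> 1 \<and> i = pc v"
    then show ?thesis using tpar(3)[OF v] mv by auto
  next
    assume a: "u \<noteq> 1 \<and> j = pc u"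
    have "m (u, pc u) = (v, i)" using a mvj mcl(2)[OF Scl[OF v i]] by simp
    then show ?thesis using a tpar(3)[OF u] by auto
  qed
qed

lemma no_loop:
  assumes gd: "good n d K m" and BK: "B \<le> K"
  shows "\<not> has_loop d m S"
proof
  assume "has_loop d m S"
  then obtain u i where u: "u \<in> S" "i < d" "fst (m (u, i)) = u" unfolding has_loop_def by auto
  from adj_par[OF gd BK u(1,2) u(1) u(3)] show False
    using par_ne[OF u(1)] by auto
qed

lemma no_multi:
  assumes gd: "good n d K m" and BK: "B \<le> K"
  shows "\<not> has_multi_edge d m S"
proof
  assume "has_multi_edge d m S"
  then obtain u v where uv: "u \<in> S" "v \<in> S" "u \<noteq> v" "edge_mult d m u v \<ge> 2"
    unfolding has_multi_edge_def by auto
  let ?E = "{(i, j). i < d \<and> j < d \<and> m (u, i) = (v, j)}"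
  have "card ?E \<ge> 2" using uv(4) unfolding edge_mult_def .
  then have "\<exists>a b. a \<in> ?E \<and> b \<in> ?E \<and> a \<noteq> b"
    by (rule card_ge2)
  then obtain i1 j1 i2 j2 where e: "i1 < d" "j1 < d" "m (u, i1) = (v, j1)" "i2 < d" "j2 < d" "m (u, i2) = (v, j2)"
    "(i1, j1) \<noteq> (i2, j2)" by auto
  have i12: "i1 \<noteq> i2" using e by auto
  have kind: "(u \<noteq> 1 \<and> par u = v \<and> i = pc u) \<or> (v \<noteq> 1 \<and> par v = u \<and> m (v, pc v) = (u, i))"
    if "i < d" "m (u, i) = (v, j)" for i j
    using adj_par[OF gd BK uv(1) that(1) uv(2)] that by simp
  note c1 = kind[OF e(1,3)] and c2 = kind[OF e(4,6)]
  show False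
  proof -
    have nb: "\<not> (par u = v \<and> par v = u)" if "u \<noteq> 1" "v \<noteq> 1"
      using tpar(4)[OF uv(1) that(1)] tpar(4)[OF uv(2) that(2)] by auto
    show False using c1 c2 i12 nb by auto
  qed
qed


lemma adj_sym: assumes "adj d m S a b" shows "adj d m S b a"
proof -
  obtain i j where ij: "i < d" "j < d" "m (a, i) = (b, j)" "a \<in> S" "b \<in> S" "a \<noteq> b"
    using assms unfolding adj_def by auto
  have "m (b, j) = (a, i)" using ij mcl(2)[OF Scl[OF ij(4,1)]] by simp
  then show ?thesis using ij unfolding adj_def by auto
qed

lemma adj_parent: assumes "w \<in> S" "w \<noteq> 1" shows "adj d m S w (par w)"
proof -
  have cl: "(w, pc w) \<in> clones n d" using Scl[OF assms(1) tpar(2)[OF assms]] .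
  have "snd (m (w, pc w)) < d" using mcl(1)[OF cl] unfolding clones_def by auto
  moreover have "m (w, pc w) = (par w, snd (m (w, pc w)))" using mpar[OF assms] .
  ultimately show ?thesis unfolding adj_def using tpar[OF assms] par_ne[OF assms] assms(1)
    by metis
qed

lemma connected: "connected_induced d m S"
proof -
  have up: "(adj d m S)\<^sup>*\<^sup>* w 1 \<and> (adj d m S)\<^sup>*\<^sup>* 1 w" if "w \<in> S" for w
    using that
  proof (induction "dep w" arbitrary: w rule: less_induct)
    case less
    show ?case
    proof (cases "w = 1")
      case True then show ?thesis by simp
    next
      case False
      note tp = tpar[OF less.prems False]
      have IH: "(adj d m S)\<^sup>*\<^sup>* (par w) 1 \<and> (adj d m S)\<^sup>*\<^sup>* 1 (par w)"
        using less.hyps[OF tp(4) tp(1)] .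
      have a1: "adj d m S w (par w)" using adj_parent[OF less.prems False] .
      have a2: "adj d m S (par w) w" using adj_sym[OF a1] .
      show ?thesis using IH a1 a2
        by (meson converse_rtranclp_into_rtranclp rtranclp.rtrancl_into_rtrancl)
    qed
  qed
  show ?thesis unfolding connected_induced_def
    using up by (meson rtranclp_trans)
qed

lemma no_cycle:
  assumes gd: "good n d K m" and BK: "B \<le> K"
  shows "\<not> has_cycle d m S"
proof
  assume "has_cycle d m S"
  then obtain xs where xs: "distinct xs" "length xs \<ge> 3" "set xs \<subseteq> S"
    "\<forall>i < length xs - 1. adj d m S (xs ! i) (xs ! Suc i)" "adj d m S (last xs) (hd xs)"
    unfolding has_cycle_def by blast
  define L where "L = length xs"
  define nxt where "nxt = (\<lambda>k. if k = L - 1 then 0 else Suc k)"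
  define prv where "prv = (\<lambda>k. if k = 0 then L - 1 else k - 1)"
  have L3: "L \<ge> 3" using xs(2) L_def by simp
  have ne: "xs \<noteq> []" using L3 L_def by auto
  have adjn: "adj d m S (xs ! k) (xs ! nxt k)" if "k < L" for k
  proof (cases "k = L - 1")
    case True
    have "xs ! k = last xs" using True ne L_def by (simp add: last_conv_nth)
    moreover have "xs ! 0 = hd xs" using ne by (simp add: hd_conv_nth)
    ultimately show ?thesis using xs(5) True unfolding nxt_def by simp
  next
    case False
    then show ?thesis using xs(4) that unfolding nxt_def L_def by simp
  qed
  have nxtprv: "nxt (prv k) = k" if "k < L" for k
    using that L3 unfolding nxt_def prv_def by auto
  have prvL: "prv k < L" "nxt k < L" if "k < L" for k
    using that L3 unfolding nxt_def prv_def by auto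
  have pn: "prv k \<noteq> nxt k" if "k < L" for k
    using that L3 unfolding nxt_def prv_def by auto
  have fin: "finite (dep ` set xs)" by simp
  have "Max (dep ` set xs) \<in> dep ` set xs" using ne by (intro Max_in) auto
  then obtain z where z: "z \<in> set xs" "dep z = Max (dep ` set xs)" by auto
  then obtain k where k: "k < L" "xs ! k = z" unfolding L_def by (auto simp: in_set_conv_nth)
  have maxd: "dep y \<le> dep z" if "y \<in> set xs" for y using z(2) that by simp
  have parz: "par z = xs ! j" if j: "j < L" "adj d m S z (xs ! j)" for j
  proof -
    obtain i where i: "i < d" "fst (m (z, i)) = xs ! j" "z \<in> S" "xs ! j \<in> S"
      using j(2) unfolding adj_def by (metis fst_conv)
    have y: "xs ! j \<in> set xs" using j(1) L_def by simp
    from adj_par[OF gd BK i(3) i(1) i(4) i(2)]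
    show ?thesis
    proof
      assume "xs ! j \<noteq> 1 \<and> par (xs ! j) = z \<and> m (xs ! j, pc (xs ! j)) = (z, i)"
      then have "dep z < dep (xs ! j)" using tpar(4)[OF i(4)] by auto
      then show ?thesis using maxd[OF y] by simp
    qed simp
  qed
  have a1: "par z = xs ! nxt k" using parz[OF prvL(2)[OF k(1)]] adjn[OF k(1)] k(2) by simp
  have "adj d m S (xs ! prv k) (xs ! k)" using adjn[OF prvL(1)[OF k(1)]] nxtprv[OF k(1)] by simp
  then have a2: "par z = xs ! prv k" using parz[OF prvL(1)[OF k(1)]] adj_sym k(2) by simp
  have "xs ! nxt k \<noteq> xs ! prv k"
    using xs(1) pn[OF k(1)] prvL[OF k(1)] L_def by (simp add: nth_eq_iff_index_eq)
  then show False using a1 a2 by simp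
qed

lemma tree:
  assumes gd: "good n d K m" and BK: "B \<le> K"
  shows "is_tree d m S"
  unfolding is_tree_def using connected no_cycle[OF gd BK] no_loop[OF gd BK] no_multi[OF gd BK] by simp

lemma ext_count:
  assumes gd: "good n d K m" and BK: "B \<le> K" and d3: "d \<ge> 3"
  shows "card S \<le> (\<Sum>v\<in>S. card {i\<in>{..<d}. fst (m (v, i)) \<notin> S})"
proof -
  define I where "I = Sigma S (\<lambda>v. {i\<in>{..<d}. fst (m (v, i)) \<in> S})"
  define J where "J = Sigma S (\<lambda>v. {i\<in>{..<d}. fst (m (v, i)) \<notin> S})"
  have finS: "finite S" using tin(1) .
  have sumJ: "(\<Sum>v\<in>S. card {i\<in>{..<d}. fst (m (v, i)) \<notin> S}) = card J"
    unfolding J_def using finS by (simp add: card_SigmaI)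
  have un: "S \<times> {..<d} = I \<union> J" "I \<inter> J = {}" unfolding I_def J_def by auto
  have finIJ: "finite I" "finite J" using finS unfolding I_def J_def by auto
  have cardIJ: "card I + card J = d * card S"
  proof -
    have "card (S \<times> {..<d}) = card S * d" by (simp add: card_cartesian_product)
    then show ?thesis using card_Un_disjoint[OF finIJ un(2)] un(1) by (simp add: mult.commute)
  qed
  have sub: "I \<subseteq> (\<lambda>w. (w, pc w)) ` (S - {1}) \<union> (\<lambda>w. m (w, pc w)) ` (S - {1})"
  proof
    fix x assume "x \<in> I"
    then obtain v i where x: "x = (v, i)" "v \<in> S" "i < d" "fst (m (v, i)) \<in> S" unfolding I_def by auto
    from adj_par[OF gd BK x(2,3,4) refl]
    show "x \<in> (\<lambda>w. (w, pc w)) ` (S - {1}) \<union> (\<lambda>w. m (w, pc w)) ` (S - {1})"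
    proof
      assume "v \<noteq> 1 \<and> par v = fst (m (v, i)) \<and> i = pc v"
      then show ?thesis using x by auto
    next
      assume a: "fst (m (v, i)) \<noteq> 1 \<and> par (fst (m (v, i))) = v \<and> m (fst (m (v, i)), pc (fst (m (v, i)))) = (v, i)"
      have "fst (m (v, i)) \<in> S - {1}" using a x by simp
      then have "m (fst (m (v, i)), pc (fst (m (v, i)))) \<in> (\<lambda>w. m (w, pc w)) ` (S - {1})"
        by (rule imageI)
      then show ?thesis using a x(1) by simp
    qed
  qed
  have "card I \<le> card ((\<lambda>w. (w, pc w)) ` (S - {1}) \<union> (\<lambda>w. m (w, pc w)) ` (S - {1}))"
    using sub finS by (intro card_mono) auto
  also have "\<dots> \<le> card ((\<lambda>w. (w, pc w)) ` (S - {1})) + card ((\<lambda>w. m (w, pc w)) ` (S - {1}))"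
    by (rule card_Un_le)
  also have "\<dots> \<le> card (S - {1}) + card (S - {1})"
    by (intro add_mono card_image_le) (use finS in auto)
  also have "\<dots> = 2 * (card S - 1)" using finS tin(2) by simp
  finally have cI: "card I \<le> 2 * (card S - 1)" .
  have "card S \<ge> 1" using finS tin(2) by (metis card_0_eq empty_iff less_one not_le)
  moreover have "d * card S \<ge> 3 * card S" using d3 by (rule mult_le_mono1)
  ultimately have "card J \<ge> card S" using cardIJ cI by linarith
  then show ?thesis using sumJ by simp
qed

end


definition step :: "mt \<Rightarrow> (nat \<Rightarrow> nat) \<Rightarrow> nat set \<Rightarrow> nat set" where
  "step m c S = S \<union> (\<lambda>v. fst (m (v, c v))) ` S"

lemma informed_Suc_step: "informed m \<omega> (Suc t) = step m (\<omega> !! t) (informed m \<omega> t)"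
  by (simp add: step_def)

definition npar :: "mt \<Rightarrow> (nat \<Rightarrow> nat) \<Rightarrow> nat set \<Rightarrow> (nat \<Rightarrow> nat) \<Rightarrow> nat \<Rightarrow> nat" where
  "npar m c S par u = (if u \<in> S then par u else (SOME v. v \<in> S \<and> fst (m (v, c v)) = u))"

definition npc :: "mt \<Rightarrow> (nat \<Rightarrow> nat) \<Rightarrow> nat set \<Rightarrow> (nat \<Rightarrow> nat) \<Rightarrow> (nat \<Rightarrow> nat) \<Rightarrow> nat \<Rightarrow> nat" where
  "npc m c S par pc u = (if u \<in> S then pc u else snd (m (npar m c S par u, c (npar m c S par u))))"

definition ndep :: "nat set \<Rightarrow> nat \<Rightarrow> (nat \<Rightarrow> nat) \<Rightarrow> nat \<Rightarrow> nat" where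
  "ndep S B dep u = (if u \<in> S then dep u else Suc B)"

context tctx
begin

lemma out_lt: assumes "v \<in> S" "fst (m (v, c v)) \<notin> S" shows "c v < d"
proof (rule ccontr)
  assume "\<not> c v < d"
  then have "(v, c v) \<notin> clones n d" unfolding clones_def by auto
  then have "m (v, c v) = (v, c v)" using pm unfolding PMs_def by auto
  then show False using assms by simp
qed

lemma target_range: assumes "v \<in> S" shows "fst (m (v, c v)) \<in> {1..n}"
proof (cases "fst (m (v, c v)) \<in> S")
  case True then show ?thesis using tin(3) by auto
next
  case False
  then have "(v, c v) \<in> clones n d" using Scl[OF assms out_lt[of v c, OF assms False]] by simp
  then show ?thesis using mcl(1) unfolding clones_def by (metis SigmaE fst_conv)
qed

lemma npar_new:
  assumes "u \<in> step m c S" "u \<notin> S"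
  shows "npar m c S par u \<in> S" "fst (m (npar m c S par u, c (npar m c S par u))) = u"
proof -
  have ex: "\<exists>v. v \<in> S \<and> fst (m (v, c v)) = u" using assms unfolding step_def by auto
  show "npar m c S par u \<in> S" "fst (m (npar m c S par u, c (npar m c S par u))) = u"
    unfolding npar_def using assms(2) someI_ex[OF ex] by auto
qed

lemma step_tinv:
  shows "tinv n d m (step m c S) (Suc B) (npar m c S par) (npc m c S par pc) (ndep S B dep)"
proof -
  have tcl: "fst (m (v, c v)) \<in> {1..n}" if "v \<in> S" for v
    using target_range[OF that] .
  have sub: "step m c S \<subseteq> {1..n}" using tin(3) tcl unfolding step_def by auto
  have fin: "finite (step m c S)" using tin(1) unfolding step_def by simp
  have old: "npar m c S par w \<in> step m c S \<and> npc m c S par pc w < d \<and>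
      fst (m (w, npc m c S par pc w)) = npar m c S par w \<and> ndep S B dep (npar m c S par w) < ndep S B dep w"
    if "w \<in> S" "w \<noteq> 1" for w
    using tpar[OF that] that unfolding npar_def npc_def ndep_def step_def by auto
  have new: "npar m c S par w \<in> step m c S \<and> npc m c S par pc w < d \<and>
      fst (m (w, npc m c S par pc w)) = npar m c S par w \<and> ndep S B dep (npar m c S par w) < ndep S B dep w"
    if "w \<in> step m c S" "w \<notin> S" for w
  proof -
    define p where "p = npar m c S par w"
    note np = npar_new[OF that, folded p_def]
    have pcl: "(p, c p) \<in> clones n d" using Scl[OF np(1) out_lt[of p c, OF np(1)]] np(2) that(2) by simp
    have mp: "m (p, c p) = (w, snd (m (p, c p)))" using np(2) by (metis prod.collapse)
    have npcw: "npc m c S par pc w = snd (m (p, c p))" using that(2) unfolding npc_def p_def by simp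
    have "snd (m (p, c p)) < d" using mcl(1)[OF pcl] unfolding clones_def by auto
    moreover have "m (w, npc m c S par pc w) = (p, c p)"
      using npcw mp mcl(2)[OF pcl] by (metis)
    moreover have "ndep S B dep p < ndep S B dep w"
      using np(1) tin(5)[OF np(1)] that(2) unfolding ndep_def by simp
    ultimately show ?thesis using np(1) npcw unfolding p_def step_def by auto
  qed
  have a1: "\<forall>w\<in>step m c S. ndep S B dep w \<le> Suc B"
  proof
    fix w assume "w \<in> step m c S"
    show "ndep S B dep w \<le> Suc B" using tin(5)[of w] unfolding ndep_def by (cases "w \<in> S") auto
  qed
  have a2: "\<forall>w\<in>step m c S - {1}. npar m c S par w \<in> step m c S \<and> npc m c S par pc w < d \<and>
      fst (m (w, npc m c S par pc w)) = npar m c S par w \<and> ndep S B dep (npar m c S par w) < ndep S B dep w"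
  proof
    fix w assume w: "w \<in> step m c S - {1}"
    show "npar m c S par w \<in> step m c S \<and> npc m c S par pc w < d \<and>
      fst (m (w, npc m c S par pc w)) = npar m c S par w \<and> ndep S B dep (npar m c S par w) < ndep S B dep w"
    proof (cases "w \<in> S")
      case True then show ?thesis using old w by blast
    next
      case False then show ?thesis using new w by blast
    qed
  qed
  have a3: "1 \<in> step m c S" using tin(2) unfolding step_def by simp
  have a4: "ndep S B dep 1 = 0" using tin(2,4) unfolding ndep_def by simp
  show ?thesis unfolding tinv_def using fin sub a1 a2 a3 a4 by blast
qed

lemma distinct_targets:
  assumes gd: "good n d K m" and BK: "Suc B \<le> K"
    and v: "v1 \<in> S" "v2 \<in> S" and eq: "fst (m (v1, c v1)) = fst (m (v2, c v2))"
    and ns: "fst (m (v1, c v1)) \<notin> S"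
  shows "v1 = v2"
proof -
  interpret T: tctx n d m "step m c S" "Suc B" "npar m c S par" "npc m c S par pc" "ndep S B dep"
    using pm step_tinv by unfold_locales auto
  define u where "u = fst (m (v1, c v1))"
  have uS: "u \<in> step m c S" using v unfolding u_def step_def by auto
  have key: "npar m c S par u = v" if vv: "v \<in> S" "fst (m (v, c v)) = u" for v
  proof -
    have vS: "v \<in> step m c S" using vv unfolding step_def by auto
    have cv: "c v < d" using out_lt[of v c, OF vv(1)] vv(2) ns u_def by simp
    from T.adj_par[OF gd BK vS cv uS vv(2)]
    show ?thesis
    proof
      assume "v \<noteq> 1 \<and> npar m c S par v = u \<and> c v = npc m c S par pc v"
      then have "par v = u" using vv(1) unfolding npar_def by simp
      then show ?thesis using tpar(1)[OF vv(1)] ns u_def \<open>v \<noteq> 1 \<and> _\<close> by auto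
    qed auto
  qed
  show ?thesis using key[OF v(1)] key[OF v(2)] eq u_def by simp
qed

lemma card_step:
  assumes gd: "good n d K m" and BK: "Suc B \<le> K"
  shows "card (step m c S) = card S + card {v\<in>S. fst (m (v, c v)) \<notin> S}"
proof -
  define T where "T = {v\<in>S. fst (m (v, c v)) \<notin> S}"
  have eq: "step m c S = S \<union> (\<lambda>v. fst (m (v, c v))) ` T" unfolding step_def T_def by auto
  have inj: "inj_on (\<lambda>v. fst (m (v, c v))) T"
    using distinct_targets[OF gd BK] unfolding T_def inj_on_def by auto
  have finT: "finite T" using tin(1) unfolding T_def by simp
  have "card (step m c S) = card S + card ((\<lambda>v. fst (m (v, c v))) ` T)"
    unfolding eq by (rule card_Un_disjoint) (use tin(1) finT T_def in auto)
  also have "card ((\<lambda>v. fst (m (v, c v))) ` T) = card T" using card_image[OF inj] .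
  finally show ?thesis unfolding T_def .
qed

end


lemma choice_set:
  assumes "d > 0"
  shows "set_pmf (choice_pmf n d) = PiE_dflt {1..n} 0 (\<lambda>_. {..<d})" "finite (set_pmf (choice_pmf n d))"
proof -
  have "set_pmf (choice_pmf n d) = PiE_dflt {1..n} 0 (set_pmf \<circ> (\<lambda>_. pmf_of_set {..<d}))"
    unfolding choice_pmf_def by (rule set_Pi_pmf) simp
  also have "set_pmf \<circ> (\<lambda>_. pmf_of_set {..<d}) = (\<lambda>_. {..<d})"
  proof -
    have "{..<d} \<noteq> {}" using assms by auto
    then show ?thesis by (auto simp: fun_eq_iff)
  qed
  finally show s: "set_pmf (choice_pmf n d) = PiE_dflt {1..n} 0 (\<lambda>_. {..<d})" .
  show "finite (set_pmf (choice_pmf n d))" unfolding s by (intro finite_PiE_dflt) auto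
qed

lemma choice_lt: "d > 0 \<Longrightarrow> c \<in> set_pmf (choice_pmf n d) \<Longrightarrow> v \<in> {1..n} \<Longrightarrow> c v < d"
  using choice_set(1)[of d n] unfolding PiE_dflt_def by auto

lemma coord_prob:
  assumes "d > 0" "v \<in> {1..n}"
  shows "measure_pmf.prob (choice_pmf n d) {c. P (c v)} = real (card {i\<in>{..<d}. P i}) / real d"
proof -
  have "measure_pmf.prob (choice_pmf n d) {c. P (c v)} = measure_pmf.prob (map_pmf (\<lambda>c. c v) (choice_pmf n d)) {i. P i}"
    by (simp add: vimage_def)
  also have "map_pmf (\<lambda>c. c v) (choice_pmf n d) = pmf_of_set {..<d}"
    unfolding choice_pmf_def using assms by (subst Pi_pmf_component) auto
  also have "measure_pmf.prob (pmf_of_set {..<d}) {i. P i} = real (card ({..<d} \<inter> {i. P i})) / real (card {..<d})"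
    using assms by (subst measure_pmf_of_set) auto
  also have "{..<d} \<inter> {i. P i} = {i\<in>{..<d}. P i}" by auto
  finally show ?thesis by simp
qed

lemma recip_bound:
  fixes X b :: real
  assumes "X > 0" "0 \<le> b" "b \<le> X"
  shows "1 / (X + b) \<le> 1 / X - b / (2 * X^2)"
proof -
  have "1 / X - b / (2 * X^2) - 1 / (X + b) = b * (X - b) / (2 * X^2 * (X + b))"
    using assms by (simp add: field_simps power2_eq_square)
  also have "\<dots> \<ge> 0" using assms by (intro divide_nonneg_pos mult_nonneg_nonneg) auto
  finally show ?thesis by simp
qed

context tctx
begin

lemma exp_step:
  assumes gd: "good n d K m" and BK: "Suc B \<le> K" and d3: "d \<ge> 3"
  shows "measure_pmf.expectation (choice_pmf n d) (\<lambda>c. 1 / real (card (step m c S)))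
         \<le> (1 - 1 / (2 * real d)) / real (card S)"
proof -
  define X where "X = real (card S)"
  have d0: "d > 0" using d3 by simp
  have X0: "X > 0" using tin(1,2) X_def by (simp add: card_gt_0_iff) (metis empty_iff)
  define E where "E = (\<lambda>v. {c. fst (m (v, c v)) \<notin> S})"
  define Bc where "Bc = (\<lambda>c. \<Sum>v\<in>S. indicator (E v) c :: real)"
  note fin = choice_set(2)[OF d0, of n]
  have Bc_eq: "Bc c = real (card {v\<in>S. fst (m (v, c v)) \<notin> S})" for c
  proof -
    have "Bc c = (\<Sum>v\<in>S. if fst (m (v, c v)) \<notin> S then 1 else 0)"
      unfolding Bc_def E_def by (intro sum.cong) (auto split: split_indicator)
    also have "\<dots> = real (card {v\<in>S. fst (m (v, c v)) \<notin> S})"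
      using sum.inter_filter[OF tin(1), of "\<lambda>_. 1::real" "\<lambda>v. fst (m (v, c v)) \<notin> S"] by simp
    finally show ?thesis .
  qed
  have Bc_le: "0 \<le> Bc c \<and> Bc c \<le> X" for c
    unfolding Bc_eq X_def using tin(1) by (auto intro!: card_mono)
  have cS: "\<forall>v\<in>S. c v < d" if "c \<in> set_pmf (choice_pmf n d)" for c
    using choice_lt[OF d0 that] tin(3) by auto
  have pw: "1 / real (card (step m c S)) \<le> 1 / X - Bc c / (2 * X^2)"
    if "c \<in> set_pmf (choice_pmf n d)" for c
  proof -
    have "real (card (step m c S)) = X + Bc c"
      using card_step[OF gd BK] Bc_eq X_def by simp
    then show ?thesis using recip_bound[OF X0] Bc_le[of c] by simp
  qed
  have "measure_pmf.expectation (choice_pmf n d) (\<lambda>c. 1 / real (card (step m c S)))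
      \<le> measure_pmf.expectation (choice_pmf n d) (\<lambda>c. 1 / X - Bc c / (2 * X^2))"
    by (intro integral_mono_AE integrable_measure_pmf_finite fin) (auto simp: AE_measure_pmf_iff pw)
  also have "\<dots> = 1 / X - measure_pmf.expectation (choice_pmf n d) Bc / (2 * X^2)"
    by (subst Bochner_Integration.integral_diff) (auto intro: integrable_measure_pmf_finite fin simp: prob_space.prob_space)
  also have "measure_pmf.expectation (choice_pmf n d) Bc = (\<Sum>v\<in>S. measure_pmf.prob (choice_pmf n d) (E v))"
    unfolding Bc_def by (subst Bochner_Integration.integral_sum) (auto intro: integrable_measure_pmf_finite fin)
  also have "\<dots> = (\<Sum>v\<in>S. real (card {i\<in>{..<d}. fst (m (v, i)) \<notin> S}) / real d)"
    unfolding E_def using tin(3) by (intro sum.cong refl coord_prob d0) auto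
  also have "\<dots> = (\<Sum>v\<in>S. real (card {i\<in>{..<d}. fst (m (v, i)) \<notin> S})) / real d"
    by (simp add: sum_divide_distrib)
  finally have step1: "measure_pmf.expectation (choice_pmf n d) (\<lambda>c. 1 / real (card (step m c S)))
      \<le> 1 / X - (\<Sum>v\<in>S. real (card {i\<in>{..<d}. fst (m (v, i)) \<notin> S})) / real d / (2 * X^2)" .
  have "X \<le> (\<Sum>v\<in>S. real (card {i\<in>{..<d}. fst (m (v, i)) \<notin> S}))"
  proof -
    have "B \<le> K" using BK by simp
    then have "card S \<le> (\<Sum>v\<in>S. card {i\<in>{..<d}. fst (m (v, i)) \<notin> S})" using ext_count[OF gd _ d3] by blast
    then have "real (card S) \<le> real (\<Sum>v\<in>S. card {i\<in>{..<d}. fst (m (v, i)) \<notin> S})" by (rule of_nat_mono)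
    then show ?thesis unfolding X_def by simp
  qed
  then have "X / real d / (2 * X^2) \<le> (\<Sum>v\<in>S. real (card {i\<in>{..<d}. fst (m (v, i)) \<notin> S})) / real d / (2 * X^2)"
    using d0 X0 by (intro divide_right_mono) auto
  moreover have "X / real d / (2 * X^2) = 1 / (2 * real d) / X"
    using X0 d0 by (simp add: field_simps power2_eq_square)
  ultimately have "measure_pmf.expectation (choice_pmf n d) (\<lambda>c. 1 / real (card (step m c S)))
      \<le> 1 / X - 1 / (2 * real d) / X" using step1 by linarith
  also have "\<dots> = (1 - 1 / (2 * real d)) / X" using X0 by (simp add: field_simps)
  finally show ?thesis unfolding X_def .
qed

end


fun gen :: "mt \<Rightarrow> (nat \<Rightarrow> nat) stream \<Rightarrow> nat set \<Rightarrow> nat \<Rightarrow> nat set" where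
  "gen m \<omega> S 0 = S"
| "gen m \<omega> S (Suc t) = gen m (stl \<omega>) (step m (shd \<omega>) S) t"

lemma gen_Suc': "gen m \<omega> S (Suc t) = step m (\<omega> !! t) (gen m \<omega> S t)"
proof (induction t arbitrary: \<omega> S)
  case 0 then show ?case by simp
next
  case (Suc t)
  have "gen m \<omega> S (Suc (Suc t)) = gen m (stl \<omega>) (step m (shd \<omega>) S) (Suc t)" by simp
  also have "\<dots> = step m (stl \<omega> !! t) (gen m (stl \<omega>) (step m (shd \<omega>) S) t)" by (rule Suc.IH)
  finally show ?case by simp
qed

lemma informed_gen: "informed m \<omega> t = gen m \<omega> {1} t"
  by (induction t) (simp, simp only: informed_Suc_step gen_Suc')

lemma finite_step: "finite S \<Longrightarrow> finite (step m c S)"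
  unfolding step_def by simp

lemma finite_gen: "finite S \<Longrightarrow> finite (gen m \<omega> S t)"
  by (induction t) (auto simp del: gen.simps(2) simp: gen_Suc' finite_step)

lemma meas_any_pmf: "f \<in> measurable (measure_pmf p) N \<longleftrightarrow> f \<in> UNIV \<rightarrow> space N"
  by (subst measurable_cong_sets[OF sets_measure_pmf_count_space refl]) simp

lemma meas_step:
  assumes mm: "mm \<in> measurable M (count_space UNIV)"
    and om: "\<And>v. (\<lambda>x. om x v) \<in> measurable M (count_space UNIV)"
    and S: "finite S"
  shows "(\<lambda>x. step (mm x) (om x) S) \<in> measurable M (count_space {S. finite S})"
proof -
  define H where "H = (\<lambda>r x. S \<union> (\<lambda>v. fst (mm x (v, r v))) ` S)"
  have Hm: "(\<lambda>x. H r x) \<in> measurable M (count_space {S. finite S})" for r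
  proof -
    have "(\<lambda>m'. S \<union> (\<lambda>v. fst (m' (v, r v))) ` S) \<in> measurable (count_space UNIV) (count_space {S. finite S})"
      using S by auto
    from measurable_compose[OF mm this] show ?thesis unfolding H_def by simp
  qed
  have gm: "(\<lambda>x. restrict (om x) S) \<in> measurable M (count_space (PiE S (\<lambda>_. UNIV)))"
  proof (subst measurable_count_space_eq_countable)
    show "countable (PiE S (\<lambda>_. UNIV :: nat set))" using S by (intro countable_PiE) auto
    show "(\<lambda>x. restrict (om x) S) \<in> space M \<rightarrow> PiE S (\<lambda>_. UNIV) \<and>
      (\<forall>a\<in>PiE S (\<lambda>_. UNIV). (\<lambda>x. restrict (om x) S) -` {a} \<inter> space M \<in> sets M)"
    proof (intro conjI ballI)
      show "(\<lambda>x. restrict (om x) S) \<in> space M \<rightarrow> PiE S (\<lambda>_. UNIV)" by auto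
      fix a assume a: "a \<in> PiE S (\<lambda>_. UNIV :: nat set)"
      have "(\<lambda>x. restrict (om x) S) -` {a} \<inter> space M = {x \<in> space M. \<forall>v\<in>S. om x v = a v}"
        using a by (auto simp: fun_eq_iff PiE_def extensional_def restrict_def)
      also have "\<dots> \<in> sets M"
      proof (rule sets.sets_Collect_finite_All[OF _ S])
        fix v assume "v \<in> S"
        have "(\<lambda>x. om x v) -` {a v} \<inter> space M \<in> sets M"
          using measurable_sets[OF om[of v], of "{a v}"] by simp
        moreover have "(\<lambda>x. om x v) -` {a v} \<inter> space M = {x \<in> space M. om x v = a v}" by auto
        ultimately show "{x \<in> space M. om x v = a v} \<in> sets M" by simp
      qed
      finally show "(\<lambda>x. restrict (om x) S) -` {a} \<inter> space M \<in> sets M" .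
    qed
  qed
  have "(\<lambda>x. H (restrict (om x) S) x) \<in> measurable M (count_space {S. finite S})"
    by (rule measurable_compose_countable'[OF Hm gm]) (use S in \<open>intro countable_PiE; auto\<close>)
  moreover have "H (restrict (om x) S) x = step (mm x) (om x) S" for x
    unfolding H_def step_def by auto
  ultimately show ?thesis by simp
qed

lemma meas_gen:
  assumes mm: "mm \<in> measurable M (count_space UNIV)"
    and om: "\<And>t v. (\<lambda>x. (om x !! t) v) \<in> measurable M (count_space UNIV)"
    and S: "finite S"
  shows "(\<lambda>x. gen (mm x) (om x) S t) \<in> measurable M (count_space {S. finite S})"
proof (induction t)
  case 0
  show ?case using S by simp
next
  case (Suc t)
  have "(\<lambda>x. (\<lambda>A x. step (mm x) (om x !! t) A) (gen (mm x) (om x) S t) x) \<in> measurable M (count_space {S. finite S})"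
  proof (rule measurable_compose_countable'[OF _ Suc.IH])
    fix A :: "nat set" assume "A \<in> {S. finite S}"
    then show "(\<lambda>x. step (mm x) (om x !! t) A) \<in> measurable M (count_space {S. finite S})"
      using meas_step[OF mm om] by simp
  qed (rule countable_Collect_finite)
  then show ?case by (simp del: gen.simps(2) add: gen_Suc')
qed

lemma meas_fst_any: "fst \<in> measurable (measure_pmf p \<Otimes>\<^sub>M N) (count_space UNIV)"
proof -
  have "(\<lambda>m. m) \<in> measurable (measure_pmf p) (count_space UNIV)" by (simp add: meas_any_pmf)
  from measurable_compose[OF measurable_fst this] show ?thesis by simp
qed

lemma meas_snd_coord: "(\<lambda>x. (snd x !! t) v) \<in> measurable (M \<Otimes>\<^sub>M stream_space (measure_pmf q)) (count_space UNIV)"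
proof -
  have a: "(\<lambda>x. snd x !! t) \<in> measurable (M \<Otimes>\<^sub>M stream_space (measure_pmf q)) (measure_pmf q)"
    by (rule measurable_compose[OF measurable_snd measurable_snth])
  have b: "(\<lambda>c. c v) \<in> measurable (measure_pmf q) (count_space UNIV)" by (simp add: meas_any_pmf)
  from measurable_compose[OF a b] show ?thesis by simp
qed

lemma meas_stream_coord: "(\<lambda>\<omega>. (\<omega> !! t) v) \<in> measurable (stream_space (measure_pmf q)) (count_space UNIV)"
proof -
  have b: "(\<lambda>c. c v) \<in> measurable (measure_pmf q) (count_space UNIV)" by (simp add: meas_any_pmf)
  from measurable_compose[OF measurable_snth b] show ?thesis by simp
qed


abbreviation SSp :: "nat \<Rightarrow> nat \<Rightarrow> (nat \<Rightarrow> nat) stream measure" where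
  "SSp n d \<equiv> stream_space (measure_pmf (choice_pmf n d))"

lemma step_sup: "S \<subseteq> step m c S" unfolding step_def by auto

lemma gen_sup: "S \<subseteq> gen m \<omega> S t"
  by (induction t) (auto simp del: gen.simps(2) simp: gen_Suc' step_def)

lemma meas_gen_stream: assumes "finite S" shows "(\<lambda>\<omega>. gen m \<omega> S t) \<in> measurable (SSp n d) (count_space {S. finite S})"
proof -
  have "(\<lambda>_. m) \<in> measurable (SSp n d) (count_space UNIV)" by simp
  from meas_gen[OF this meas_stream_coord assms] show ?thesis by simp
qed

lemma SSp_prob: "prob_space (SSp n d)"
  by (rule prob_space.prob_space_stream_space) (rule prob_space_measure_pmf)

lemma stream_bound:
  assumes gd: "good n d K m" and d3: "d \<ge> 3" and pm: "m \<in> PMs (clones n d)"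
  shows "\<forall>S B par pc dep. tinv n d m S B par pc dep \<longrightarrow> B + t \<le> K \<longrightarrow>
     (\<integral>\<^sup>+\<omega>. ennreal (1 / real (card (gen m \<omega> S t))) \<partial>SSp n d) \<le> ennreal ((1 - 1 / (2 * real d)) ^ t / real (card S))"
proof (induction t)
  case 0
  show ?case
  proof (intro allI impI)
    fix S B par pc dep
    interpret P: prob_space "SSp n d" by (rule SSp_prob)
    show "(\<integral>\<^sup>+\<omega>. ennreal (1 / real (card (gen m \<omega> S 0))) \<partial>SSp n d) \<le> ennreal ((1 - 1 / (2 * real d)) ^ 0 / real (card S))"
      by (simp add: P.emeasure_space_1)
  qed
next
  case (Suc t)
  define \<rho> where "\<rho> = 1 - 1 / (2 * real d)"
  have \<rho>0: "0 \<le> \<rho>" using d3 unfolding \<rho>_def by (simp add: field_simps)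
  show ?case
  proof (intro allI impI)
    fix S B par pc dep
    assume ti: "tinv n d m S B par pc dep" and BK: "B + Suc t \<le> K"
    interpret T: tctx n d m S B par pc dep using pm ti by unfold_locales
    have d0: "d > 0" using d3 by simp
    have finS: "finite S" using T.tin(1) .
    have meas: "(\<lambda>\<omega>. ennreal (1 / real (card (gen m \<omega> S (Suc t))))) \<in> borel_measurable (SSp n d)"
    proof -
      have "(\<lambda>A. ennreal (1 / real (card A))) \<in> measurable (count_space {S. finite S}) borel" by simp
      from measurable_compose[OF meas_gen_stream[OF finS] this] show ?thesis by (simp del: gen.simps(2))
    qed
    have "(\<integral>\<^sup>+\<omega>. ennreal (1 / real (card (gen m \<omega> S (Suc t)))) \<partial>SSp n d)
        = (\<integral>\<^sup>+c. (\<integral>\<^sup>+\<omega>. ennreal (1 / real (card (gen m (c ## \<omega>) S (Suc t)))) \<partial>SSp n d) \<partial>measure_pmf (choice_pmf n d))"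
      by (rule prob_space.nn_integral_stream_space[OF prob_space_measure_pmf meas])
    also have "\<dots> = (\<integral>\<^sup>+c. (\<integral>\<^sup>+\<omega>. ennreal (1 / real (card (gen m \<omega> (step m c S) t))) \<partial>SSp n d) \<partial>measure_pmf (choice_pmf n d))"
      by simp
    also have "\<dots> \<le> (\<integral>\<^sup>+c. ennreal (\<rho> ^ t / real (card (step m c S))) \<partial>measure_pmf (choice_pmf n d))"
    proof (rule nn_integral_mono_AE)
      show "AE c in measure_pmf (choice_pmf n d). (\<integral>\<^sup>+\<omega>. ennreal (1 / real (card (gen m \<omega> (step m c S) t))) \<partial>SSp n d)
          \<le> ennreal (\<rho> ^ t / real (card (step m c S)))"
      proof (subst AE_measure_pmf_iff, intro ballI)
        fix c assume c: "c \<in> set_pmf (choice_pmf n d)"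
        have cS: "\<forall>v\<in>S. c v < d" using choice_lt[OF d0 c] T.tin(3) by auto
        have "tinv n d m (step m c S) (Suc B) (npar m c S par) (npc m c S par pc) (ndep S B dep)"
          using T.step_tinv .
        then show "(\<integral>\<^sup>+\<omega>. ennreal (1 / real (card (gen m \<omega> (step m c S) t))) \<partial>SSp n d)
          \<le> ennreal (\<rho> ^ t / real (card (step m c S)))"
          using Suc.IH[rule_format, of "step m c S" "Suc B" "npar m c S par" "npc m c S par pc" "ndep S B dep"] BK
          unfolding \<rho>_def by simp
      qed
    qed
    also have "\<dots> = ennreal (measure_pmf.expectation (choice_pmf n d) (\<lambda>c. \<rho> ^ t / real (card (step m c S))))"
      by (rule nn_integral_eq_integral) (auto intro!: integrable_measure_pmf_finite choice_set(2)[OF d0] \<rho>0 divide_nonneg_nonneg zero_le_power)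
    also have "measure_pmf.expectation (choice_pmf n d) (\<lambda>c. \<rho> ^ t / real (card (step m c S)))
        = \<rho> ^ t * measure_pmf.expectation (choice_pmf n d) (\<lambda>c. 1 / real (card (step m c S)))"
    proof -
      have "(\<lambda>c. \<rho> ^ t / real (card (step m c S))) = (\<lambda>c. \<rho> ^ t * (1 / real (card (step m c S))))" by simp
      then show ?thesis by (simp only: integral_mult_right_zero)
    qed
    also have "\<dots> \<le> \<rho> ^ t * (\<rho> / real (card S))"
      using T.exp_step[OF gd _ d3] BK \<rho>0 unfolding \<rho>_def by (intro mult_left_mono) auto
    finally show "(\<integral>\<^sup>+\<omega>. ennreal (1 / real (card (gen m \<omega> S (Suc t)))) \<partial>SSp n d)
        \<le> ennreal ((1 - 1 / (2 * real d)) ^ Suc t / real (card S))"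
      unfolding \<rho>_def by (simp add: ennreal_leI mult.commute)
  qed
qed

lemma stream_prob:
  assumes gd: "good n d K m" and d3: "d \<ge> 3" and pm: "m \<in> PMs (clones n d)"
    and ti: "tinv n d m S B par pc dep" and BK: "B + t \<le> K" and L: "L \<ge> 0"
  shows "measure (SSp n d) {\<omega>. real (card (gen m \<omega> S t)) \<le> L}
       \<le> L * (1 - 1 / (2 * real d)) ^ t / real (card S)"
proof -
  interpret P: prob_space "SSp n d" by (rule SSp_prob)
  interpret T: tctx n d m S B par pc dep using pm ti by unfold_locales
  have finS: "finite S" using T.tin(1) .
  define A where "A = {\<omega>. real (card (gen m \<omega> S t)) \<le> L}"
  have Asets: "A \<in> sets (SSp n d)"
  proof -
    have "(\<lambda>\<omega>. gen m \<omega> S t) -` {X. finite X \<and> real (card X) \<le> L} \<inter> space (SSp n d) \<in> sets (SSp n d)"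
      by (rule measurable_sets[OF meas_gen_stream[OF finS]]) auto
    moreover have "(\<lambda>\<omega>. gen m \<omega> S t) -` {X. finite X \<and> real (card X) \<le> L} \<inter> space (SSp n d) = A"
      unfolding A_def using finite_gen[OF finS] by (auto simp: space_stream_space)
    ultimately show ?thesis by simp
  qed
  have pos: "card (gen m \<omega> S t) > 0" for \<omega>
    using gen_sup[of S m \<omega> t] T.tin(2) finite_gen[OF finS, of m \<omega> t]
    by (metis card_gt_0_iff empty_iff subsetD)
  have "emeasure (SSp n d) A = (\<integral>\<^sup>+\<omega>. indicator A \<omega> \<partial>SSp n d)"
    using Asets by simp
  also have "\<dots> \<le> (\<integral>\<^sup>+\<omega>. ennreal L * ennreal (1 / real (card (gen m \<omega> S t))) \<partial>SSp n d)"
  proof (rule nn_integral_mono)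
    fix \<omega>
    show "indicator A \<omega> \<le> ennreal L * ennreal (1 / real (card (gen m \<omega> S t)))"
    proof (cases "\<omega> \<in> A")
      case True
      then have "1 \<le> L * (1 / real (card (gen m \<omega> S t)))"
        using pos[of \<omega>] unfolding A_def by (simp add: field_simps)
      then have "ennreal 1 \<le> ennreal (L * (1 / real (card (gen m \<omega> S t))))" by (rule ennreal_leI)
      moreover have "ennreal L * ennreal (1 / real (card (gen m \<omega> S t))) = ennreal (L * (1 / real (card (gen m \<omega> S t))))"
        using L by (subst ennreal_mult) auto
      ultimately show ?thesis using True by simp
    qed simp
  qed
  also have "\<dots> = ennreal L * (\<integral>\<^sup>+\<omega>. ennreal (1 / real (card (gen m \<omega> S t))) \<partial>SSp n d)"
  proof (rule nn_integral_cmult)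
    have "(\<lambda>A. ennreal (1 / real (card A))) \<in> measurable (count_space {S. finite S}) borel" by simp
    from measurable_compose[OF meas_gen_stream[OF finS] this]
    show "(\<lambda>\<omega>. ennreal (1 / real (card (gen m \<omega> S t)))) \<in> borel_measurable (SSp n d)" by simp
  qed
  also have "\<dots> \<le> ennreal L * ennreal ((1 - 1 / (2 * real d)) ^ t / real (card S))"
    using stream_bound[OF gd d3 pm, of t, rule_format, OF ti BK] by (intro mult_left_mono) auto
  also have "\<dots> = ennreal (L * (1 - 1 / (2 * real d)) ^ t / real (card S))"
  proof -
    have "0 \<le> (1 - 1 / (2 * real d)) ^ t / real (card S)" using d3 by (simp add: field_simps)
    then show ?thesis using L by (simp add: ennreal_mult[symmetric])
  qed
  finally have "emeasure (SSp n d) A \<le> ennreal (L * (1 - 1 / (2 * real d)) ^ t / real (card S))" .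
  then show ?thesis unfolding A_def[symmetric] P.emeasure_eq_measure
    using d3 L by (subst (asm) ennreal_le_iff) (auto simp: field_simps)
qed


lemma tinv_init: "n \<ge> 1 \<Longrightarrow> tinv n d m {1} 0 par pc (\<lambda>_. 0)"
  unfolding tinv_def by auto

lemma tinv_gen:
  assumes pm: "m \<in> PMs (clones n d)" and ti: "tinv n d m S B par pc dep"
  shows "\<exists>par pc dep. tinv n d m (gen m \<omega> S t) (B + t) par pc dep"
proof (induction t)
  case 0 then show ?case using ti by auto
next
  case (Suc t)
  then obtain par' pc' dep' where t: "tinv n d m (gen m \<omega> S t) (B + t) par' pc' dep'" by blast
  interpret T: tctx n d m "gen m \<omega> S t" "B + t" par' pc' dep' using pm t by unfold_locales
  show ?case using T.step_tinv[of "\<omega> !! t"] by (auto simp del: gen.simps(2) simp: gen_Suc')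
qed

lemma tree_informed:
  assumes pm: "m \<in> PMs (clones n d)" and gd: "good n d K m" and n1: "n \<ge> 1" and tK: "t \<le> K"
  shows "is_tree d m (informed m \<omega> t)"
proof -
  obtain par pc dep where t: "tinv n d m (gen m \<omega> {1} t) (0 + t) par pc dep"
    using tinv_gen[OF pm tinv_init[OF n1]] by blast
  interpret T: tctx n d m "gen m \<omega> {1} t" "0 + t" par pc dep using pm t by unfold_locales
  show ?thesis using T.tree[OF gd] tK by (simp add: informed_gen)
qed

lemma good_event:
  assumes pm: "m \<in> PMs (clones n d)" and gd: "good n d K m" and n1: "n \<ge> 1"
    and big: "real (card (informed m \<omega> K)) > ln (real n) ^ 7"
  shows "\<exists>t. is_T0 n m \<omega> t \<and> t \<le> K \<and> is_tree d m (informed m \<omega> t)"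
proof -
  define t where "t = (LEAST t. real (card (informed m \<omega> t)) > ln (real n) ^ 7)"
  have t1: "real (card (informed m \<omega> t)) > ln (real n) ^ 7" unfolding t_def using big by (rule LeastI)
  have t2: "t \<le> K" unfolding t_def using big by (rule Least_le)
  have t3: "\<forall>s<t. \<not> real (card (informed m \<omega> s)) > ln (real n) ^ 7"
    unfolding t_def using not_less_Least by blast
  show ?thesis using t1 t2 t3 tree_informed[OF pm gd n1 t2] unfolding is_T0_def by blast
qed

lemma meas_informed_push:
  "(\<lambda>x. informed (fst x) (snd x) t) \<in> measurable (push_space n d) (count_space {S. finite S})"
proof -
  have "(\<lambda>x. gen (fst x) (snd x) {1} t) \<in> measurable (push_space n d) (count_space {S. finite S})"
    unfolding push_space_def by (rule meas_gen[OF meas_fst_any meas_snd_coord]) simp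
  then show ?thesis by (simp add: informed_gen)
qed

lemma pred_informed:
  "Measurable.pred (push_space n d) (\<lambda>x. P (fst x) (informed (fst x) (snd x) t))"
proof -
  have "(\<lambda>x. (\<lambda>A x. P (fst x) A) (informed (fst x) (snd x) t) x) \<in> measurable (push_space n d) (count_space UNIV)"
  proof (rule measurable_compose_countable'[OF _ meas_informed_push countable_Collect_finite])
    fix A :: "nat set"
    have "(\<lambda>m. P m A) \<in> measurable (count_space UNIV) (count_space UNIV)" by simp
    from measurable_compose[OF meas_fst_any[of "config_pmf n d" "SSp n d"] this]
    show "(\<lambda>x. P (fst x) A) \<in> measurable (push_space n d) (count_space UNIV)"
      unfolding push_space_def by simp
  qed
  then show ?thesis by simp
qed

lemma pred_fst: "Measurable.pred (push_space n d) (\<lambda>x. P (fst x))"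
proof -
  have "(\<lambda>m. P m) \<in> measurable (count_space UNIV) (count_space UNIV)" by simp
  from measurable_compose[OF meas_fst_any[of "config_pmf n d" "SSp n d"] this] show ?thesis unfolding push_space_def by simp
qed

lemma pred_T0:
  "Measurable.pred (push_space n d) (\<lambda>x. \<exists>t. is_T0 n (fst x) (snd x) t \<and> Q t (fst x) (informed (fst x) (snd x) t))"
proof (rule pred_intros_countable(2))
  fix t
  have a: "Measurable.pred (push_space n d) (\<lambda>x. ln (real n) ^ 7 < real (card (informed (fst x) (snd x) t)))"
    using pred_informed[of "\<lambda>_ A. ln (real n) ^ 7 < real (card A)"] by simp
  have b: "Measurable.pred (push_space n d) (\<lambda>x. Q t (fst x) (informed (fst x) (snd x) t))"
    using pred_informed[of "\<lambda>m A. Q t m A"] by simp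
  have c: "Measurable.pred (push_space n d) (\<lambda>x. \<forall>s\<in>{..<t}. \<not> ln (real n) ^ 7 < real (card (informed (fst x) (snd x) s)))"
    using pred_informed[of "\<lambda>_ A. \<not> ln (real n) ^ 7 < real (card A)"]
    by (intro pred_intros_finite(3)) auto
  have "Measurable.pred (push_space n d) (\<lambda>x. (ln (real n) ^ 7 < real (card (informed (fst x) (snd x) t)) \<and>
      (\<forall>s\<in>{..<t}. \<not> ln (real n) ^ 7 < real (card (informed (fst x) (snd x) s)))) \<and> Q t (fst x) (informed (fst x) (snd x) t))"
    by (intro pred_intros_logic(3) a b c)
  then show "Measurable.pred (push_space n d) (\<lambda>x. is_T0 n (fst x) (snd x) t \<and> Q t (fst x) (informed (fst x) (snd x) t))"
    unfolding is_T0_def by (simp add: Ball_def lessThan_iff conj_assoc)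
qed


lemma space_push: "space (push_space n d) = UNIV"
  unfolding push_space_def by (simp add: space_pair_measure space_stream_space)

lemma push_prob_space: "prob_space (push_space n d)"
  unfolding push_space_def
  by (intro prob_space_pair prob_space_measure_pmf SSp_prob)

lemma sets_push_pred: assumes "Measurable.pred (push_space n d) P" shows "{x. P x} \<in> sets (push_space n d)"
  using assms unfolding pred_def space_push by simp

lemma main_bound:
  fixes P :: "mt \<Rightarrow> (nat \<Rightarrow> nat) stream \<Rightarrow> bool"
  assumes d3: "d \<ge> 3" and n1: "n \<ge> 1" and ev: "even (n * d)"
    and incl: "\<And>m \<omega>. m \<in> PMs (clones n d) \<Longrightarrow> good n d K m \<Longrightarrow>
        real (card (informed m \<omega> K)) > ln (real n) ^ 7 \<Longrightarrow> P m \<omega>"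
    and Pm: "Measurable.pred (push_space n d) (\<lambda>x. P (fst x) (snd x))"
  shows "push_prob n d P \<ge> 1 - (measure_pmf.prob (config_pmf n d) {m. \<not> good n d K m}
            + ln (real n) ^ 7 * (1 - 1 / (2 * real d)) ^ K)"
proof -
  define M where "M = push_space n d"
  define L where "L = ln (real n) ^ 7"
  define \<rho> where "\<rho> = 1 - 1 / (2 * real d)"
  interpret PS: prob_space M unfolding M_def by (rule push_prob_space)
  interpret S2: prob_space "SSp n d" by (rule SSp_prob)
  have L0: "L \<ge> 0" unfolding L_def using n1 by simp
  define G where "G = {x. fst x \<in> PMs (clones n d) \<and> good n d K (fst x) \<and> L < real (card (informed (fst x) (snd x) K))}"
  define A1 where "A1 = {x :: mt \<times> (nat \<Rightarrow> nat) stream. \<not> (fst x \<in> PMs (clones n d) \<and> good n d K (fst x))}"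
  define A2 where "A2 = {x. fst x \<in> PMs (clones n d) \<and> good n d K (fst x) \<and> real (card (informed (fst x) (snd x) K)) \<le> L}"
  have Gs: "G \<in> sets M" unfolding G_def M_def
    by (rule sets_push_pred) (rule pred_informed[of "\<lambda>m A. m \<in> PMs (clones n d) \<and> good n d K m \<and> L < real (card A)"])
  have A1s: "A1 \<in> sets M" unfolding A1_def M_def
    by (rule sets_push_pred) (rule pred_fst)
  have A2s: "A2 \<in> sets M" unfolding A2_def M_def
    by (rule sets_push_pred) (rule pred_informed[of "\<lambda>m A. m \<in> PMs (clones n d) \<and> good n d K m \<and> real (card A) \<le> L"])
  have Es: "{x \<in> space M. P (fst x) (snd x)} \<in> sets M"
    using Pm unfolding M_def pred_def .
  have GE: "G \<subseteq> {x \<in> space M. P (fst x) (snd x)}"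
    using incl unfolding G_def L_def M_def space_push by auto
  have sp: "space M = G \<union> (A1 \<union> A2)" unfolding M_def space_push G_def A1_def A2_def by auto
  have "1 = measure M (space M)" by (simp add: PS.prob_space)
  also have "\<dots> \<le> measure M G + measure M (A1 \<union> A2)"
    unfolding sp by (rule measure_subadditive) (use Gs A1s A2s PS.emeasure_finite in auto)
  also have "\<dots> \<le> measure M G + (measure M A1 + measure M A2)"
    using measure_subadditive[OF A1s A2s] PS.emeasure_finite by simp
  finally have main: "1 \<le> measure M G + (measure M A1 + measure M A2)" .
  have mA1: "measure M A1 = measure_pmf.prob (config_pmf n d) {m. \<not> good n d K m}"
  proof -
    define X where "X = {m. \<not> (m \<in> PMs (clones n d) \<and> good n d K m)}"
    have A1eq: "A1 = X \<times> space (SSp n d)" unfolding A1_def X_def by (auto simp: space_stream_space)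
    have "emeasure M A1 = emeasure (measure_pmf (config_pmf n d)) X * emeasure (SSp n d) (space (SSp n d))"
      unfolding A1eq M_def push_space_def by (rule S2.emeasure_pair_measure_Times) auto
    then have "emeasure M A1 = emeasure (measure_pmf (config_pmf n d)) X" by (simp add: S2.emeasure_space_1)
    then have "measure M A1 = measure_pmf.prob (config_pmf n d) X"
      by (simp add: PS.emeasure_eq_measure measure_pmf.emeasure_eq_measure)
    also have "\<dots> = measure_pmf.prob (config_pmf n d) (X \<inter> set_pmf (config_pmf n d))"
      by (simp add: measure_Int_set_pmf)
    also have "X \<inter> set_pmf (config_pmf n d) = {m. \<not> good n d K m} \<inter> set_pmf (config_pmf n d)"
      unfolding X_def config_pmf_set(1)[OF ev] by auto
    also have "measure_pmf.prob (config_pmf n d) \<dots> = measure_pmf.prob (config_pmf n d) {m. \<not> good n d K m}"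
      by (simp add: measure_Int_set_pmf)
    finally show ?thesis .
  qed
  have mA2: "measure M A2 \<le> L * \<rho> ^ K"
  proof -
    have slice: "emeasure (SSp n d) (Pair m -` A2) \<le> ennreal (L * \<rho> ^ K)" for m
    proof (cases "m \<in> PMs (clones n d) \<and> good n d K m")
      case True
      then have pm: "m \<in> PMs (clones n d)" and gd: "good n d K m" by auto
      have eq: "Pair m -` A2 = {\<omega>. real (card (gen m \<omega> {1} K)) \<le> L}"
        unfolding A2_def using True by (auto simp: informed_gen)
      have "measure (SSp n d) {\<omega>. real (card (gen m \<omega> {1} K)) \<le> L} \<le> L * \<rho> ^ K / real (card {1::nat})"
        unfolding \<rho>_def by (rule stream_prob[OF gd d3 pm tinv_init[OF n1]]) (use L0 in auto)
      then show ?thesis unfolding eq S2.emeasure_eq_measure by (simp add: ennreal_leI)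
    next
      case False
      then have "Pair m -` A2 = {}" unfolding A2_def by auto
      then show ?thesis by simp
    qed
    have "emeasure M A2 = (\<integral>\<^sup>+m. emeasure (SSp n d) (Pair m -` A2) \<partial>measure_pmf (config_pmf n d))"
      using A2s unfolding M_def push_space_def by (rule S2.emeasure_pair_measure_alt)
    also have "\<dots> \<le> (\<integral>\<^sup>+m. ennreal (L * \<rho> ^ K) \<partial>measure_pmf (config_pmf n d))"
      by (intro nn_integral_mono slice)
    also have "\<dots> = ennreal (L * \<rho> ^ K)" by (simp add: measure_pmf.emeasure_space_1)
    finally have "emeasure M A2 \<le> ennreal (L * \<rho> ^ K)" .
    moreover have "0 \<le> L * \<rho> ^ K" using L0 d3 unfolding \<rho>_def by (simp add: field_simps)
    ultimately show ?thesis unfolding PS.emeasure_eq_measure by (simp add: ennreal_le_iff)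
  qed
  have "measure M G \<le> push_prob n d P"
    unfolding push_prob_def M_def[symmetric] using GE Es by (intro PS.finite_measure_mono) auto
  then show ?thesis using main mA1 mA2 unfolding L_def \<rho>_def by linarith
qed


lemma cand_term:
  assumes k: "k \<ge> 1" and N: "N = n * d" and kN: "4 * k \<le> N" and d1: "d \<ge> 1"
  shows "real (card (Cand n d k)) / (real N - 2 * real k) ^ k \<le> real k * (2 * real d) ^ (k + 1) / real N"
proof -
  obtain j where j: "k = Suc j" using k by (cases k) auto
  have c: "real (card (Cand n d k)) \<le> (real d * real N) ^ j * (real d * real k * real d)"
  proof -
    have "card (Cand n d k) \<le> (d * (n * d)) ^ j * (d * Suc j * d)" using card_Cand[of n d j] j by simp
    then have "real (card (Cand n d k)) \<le> real ((d * (n * d)) ^ j * (d * Suc j * d))" by (rule of_nat_mono)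
    then show ?thesis using N j by (simp add: algebra_simps)
  qed
  have Npos: "real N > 0" using kN k by simp
  have half: "real N - 2 * real k \<ge> real N / 2" using kN by simp
  have den: "(real N - 2 * real k) ^ k \<ge> (real N / 2) ^ k"
    using half Npos by (intro power_mono) auto
  have dpos: "(real N / 2) ^ k > 0" using Npos by simp
  have "real (card (Cand n d k)) / (real N - 2 * real k) ^ k \<le> (real d * real N) ^ j * (real d * real k * real d) / (real N / 2) ^ k"
    using c den dpos by (intro frac_le) auto
  also have "\<dots> = real k * real d ^ (k + 1) * 2 ^ k / real N"
    using Npos j by (simp add: field_simps power_mult_distrib)
  also have "\<dots> \<le> real k * (2 * real d) ^ (k + 1) / real N"
  proof -
    have "real d ^ (k + 1) * 2 ^ k \<le> (2 * real d) ^ (k + 1)"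
      by (simp add: power_mult_distrib)
    then show ?thesis using Npos by (intro divide_right_mono) (auto intro: mult_left_mono simp: mult.assoc)
  qed
  finally show ?thesis .
qed

lemma cand_sum:
  assumes N: "N = n * d" and MN: "4 * M \<le> N" and d1: "d \<ge> 1"
  shows "(\<Sum>k\<in>{1..M}. real (card (Cand n d k)) / (real N - 2 * real k) ^ k)
         \<le> real M ^ 2 * (2 * real d) ^ (M + 1) / real N"
proof -
  have "(\<Sum>k\<in>{1..M}. real (card (Cand n d k)) / (real N - 2 * real k) ^ k)
      \<le> (\<Sum>k\<in>{1..M}. real M * (2 * real d) ^ (M + 1) / real N)"
  proof (intro sum_mono)
    fix k assume k: "k \<in> {1..M}"
    have "real (card (Cand n d k)) / (real N - 2 * real k) ^ k \<le> real k * (2 * real d) ^ (k + 1) / real N"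
      by (rule cand_term) (use k N MN d1 in auto)
    also have "\<dots> \<le> real M * (2 * real d) ^ (M + 1) / real N"
      using k d1 by (intro divide_right_mono mult_mono power_increasing) auto
    finally show "real (card (Cand n d k)) / (real N - 2 * real k) ^ k \<le> real M * (2 * real d) ^ (M + 1) / real N" .
  qed
  also have "\<dots> = real M ^ 2 * (2 * real d) ^ (M + 1) / real N"
    by (simp add: power2_eq_square)
  finally show ?thesis .
qed


definition Cc :: "nat \<Rightarrow> real" where "Cc d = 16 * real d"
definition bexp :: "nat \<Rightarrow> real" where "bexp d = 2 * Cc d * ln (2 * real d) + 2"
definition Acst :: "nat \<Rightarrow> real" where
  "Acst d = 4 * real d ^ 2 * (2 * Cc d + 1) ^ 2 * (2 powr bexp d) * (bexp d powr bexp d)"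
definition Kn :: "nat \<Rightarrow> nat \<Rightarrow> nat" where "Kn d n = nat \<lfloor>Cc d * ln (ln (real n))\<rfloor>"

lemma asym_bound:
  fixes d n :: nat
  assumes d3: "d \<ge> 3" and l3: "ln (real n) \<ge> 3" and nbig: "sqrt (real n) \<ge> 8 * (2 * Cc d + 1)"
  shows "4 * (2 * Kn d n + 1) \<le> n * d"
    "real (2 * Kn d n + 1) ^ 2 * (2 * real d) ^ (2 * Kn d n + 1 + 1) / real (n * d)
       + ln (real n) ^ 7 * (1 - 1 / (2 * real d)) ^ Kn d n \<le> Acst d / sqrt (real n) + 2 / ln (real n)"
proof -
  define C where "C = Cc d"
  define l where "l = ln (real n)"
  define u where "u = ln l"
  define K where "K = Kn d n"
  define M where "M = 2 * K + 1"
  define \<rho> where "\<rho> = 1 - 1 / (2 * real d)"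
  have C0: "C > 0" using d3 unfolding C_def Cc_def by simp
  have l3': "l \<ge> 3" using l3 l_def by simp
  have n1: "real n > 1"
  proof (rule ccontr)
    assume "\<not> real n > 1"
    then have "real n \<le> 1" by simp
    then have "ln (real n) \<le> 0" by (cases "n = 0") (auto simp: ln_le_zero_iff)
    then show False using l3' l_def by simp
  qed
  have u1: "u \<ge> 1"
  proof -
    have "exp 1 \<le> (3::real)" using exp_le by simp
    then have "exp 1 \<le> l" using l3' by simp
    then have "ln (exp 1) \<le> ln l" using l3' by (subst ln_le_cancel_iff) auto
    then show ?thesis unfolding u_def by simp
  qed
  have ul: "u \<le> l" unfolding u_def using ln_le_minus_one[of l] l3' by simp
  have K1: "real K \<le> C * u" unfolding K_def Kn_def C_def[symmetric] u_def[symmetric] l_def[symmetric]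
    using C0 u1 by simp
  have K2: "real K \<ge> C * u - 1" unfolding K_def Kn_def C_def[symmetric] u_def[symmetric] l_def[symmetric]
    using C0 u1 by linarith
  have M1: "real M \<le> (2 * C + 1) * l"
  proof -
    have "real M \<le> 2 * C * u + 1" unfolding M_def using K1 by simp
    also have "\<dots> \<le> 2 * C * l + l" using ul C0 l3' by (intro add_mono mult_left_mono) auto
    finally show ?thesis by (simp add: algebra_simps)
  qed
  have lsq: "l \<le> 2 * sqrt (real n)"
  proof -
    have "ln (real n) \<le> real n powr (1/2) / (1/2)" by (rule ln_powr_bound) (use n1 in auto)
    then show ?thesis unfolding l_def by (simp add: powr_half_sqrt)
  qed
  have sqn: "sqrt (real n) * sqrt (real n) = real n" using n1 by simp
  show "4 * (2 * Kn d n + 1) \<le> n * d"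
  proof -
    have "real (4 * M) \<le> 4 * ((2 * C + 1) * l)" using M1 by simp
    also have "\<dots> \<le> 4 * ((2 * C + 1) * (2 * sqrt (real n)))" using lsq C0 by (intro mult_left_mono) auto
    also have "\<dots> = 8 * (2 * C + 1) * sqrt (real n)" by simp
    also have "\<dots> \<le> sqrt (real n) * sqrt (real n)" using nbig C_def by (intro mult_right_mono) auto
    also have "\<dots> = real n" using sqn .
    also have "\<dots> \<le> real (n * d)"
    proof -
      have "real n * 1 \<le> real n * real d" using d3 by (intro mult_left_mono) auto
      then show ?thesis by simp
    qed
    finally have "4 * M \<le> n * d" by (simp only: of_nat_le_iff)
    then show ?thesis unfolding M_def K_def .
  qed
  have T2: "l ^ 7 * \<rho> ^ K \<le> 2 / l"
  proof -
    have \<rho>pos: "0 < \<rho>" "\<rho> \<le> 1" "\<rho> \<ge> 1/2" unfolding \<rho>_def using d3 by (auto simp: field_simps)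
    have "\<rho> ^ K = \<rho> powr real K" using \<rho>pos by (simp add: powr_realpow)
    also have "\<dots> \<le> \<rho> powr (C * u - 1)" using K2 \<rho>pos by (intro powr_mono') auto
    also have "\<dots> = \<rho> powr (C * u) / \<rho>" using \<rho>pos by (simp add: powr_diff)
    also have "\<rho> powr (C * u) = exp (C * u * ln \<rho>)" using \<rho>pos by (simp add: powr_def mult_ac)
    also have "\<dots> \<le> exp (- 8 * u)"
    proof -
      have "ln \<rho> \<le> \<rho> - 1" using ln_le_minus_one \<rho>pos by simp
      then have "C * ln \<rho> \<le> C * (\<rho> - 1)" using C0 by (intro mult_left_mono) auto
      also have "C * (\<rho> - 1) = -8" unfolding C_def Cc_def \<rho>_def using d3 by (simp add: field_simps)
      finally have "C * ln \<rho> * u \<le> -8 * u" using u1 by (intro mult_right_mono) auto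
      then show ?thesis by (simp add: mult_ac)
    qed
    also have "exp (- 8 * u) = 1 / l ^ 8"
    proof -
      have "exp (- 8 * u) = exp (u) powr (-8)" by (simp add: powr_def)
      also have "exp u = l" unfolding u_def using l3' by simp
      finally show ?thesis using l3' by (simp add: powr_minus powr_realpow divide_inverse)
    qed
    finally have r: "\<rho> ^ K \<le> 1 / l ^ 8 / \<rho>" using \<rho>pos by (simp add: divide_right_mono)
    have "l ^ 7 * \<rho> ^ K \<le> l ^ 7 * (1 / l ^ 8 / \<rho>)" using r l3' by (intro mult_left_mono) auto
    also have "\<dots> = 1 / (l * \<rho>)"
    proof -
      have "l ^ 8 = l * l ^ 7" by (simp add: numeral_eq_Suc)
      then show ?thesis using l3' \<rho>pos by (simp add: field_simps)
    qed
    also have "\<dots> \<le> 2 / l" using l3' \<rho>pos by (simp add: field_simps)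
    finally show ?thesis .
  qed
  define a where "a = 2 * C * ln (2 * real d)"
  define b where "b = a + 2"
  have a0: "a \<ge> 0" unfolding a_def using C0 d3 by simp
  have P1: "(2 * real d) ^ (M + 1) \<le> 4 * real d ^ 2 * l powr a"
  proof -
    have dd: "2 * real d > 1" using d3 by simp
    have e: "(2 * real d) powr real (M + 1) = (2 * real d) ^ (M + 1)" by (rule powr_realpow) (use dd in simp)
    have "(2 * real d) ^ (M + 1) = (2 * real d) powr real (M + 1)" using e by (rule sym)
    also have "\<dots> \<le> (2 * real d) powr (2 * C * u + 2)"
      using K1 dd unfolding M_def by (intro powr_mono) auto
    also have "\<dots> = (2 * real d) powr 2 * (2 * real d) powr (2 * C * u)" by (simp add: powr_add)
    also have "(2 * real d) powr 2 = 4 * real d ^ 2" using dd by (simp add: powr_numeral power2_eq_square)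
    also have "(2 * real d) powr (2 * C * u) = l powr a"
    proof -
      have "(2 * real d) powr (2 * C * u) = exp (u * a)" using dd unfolding a_def by (simp add: powr_def mult_ac)
      also have "\<dots> = exp u powr a" by (simp add: powr_def mult_ac)
      also have "exp u = l" unfolding u_def using l3' by simp
      finally show ?thesis .
    qed
    finally show ?thesis .
  qed
  have P2: "real M ^ 2 \<le> (2 * C + 1) ^ 2 * l ^ 2"
  proof -
    have "real M ^ 2 \<le> ((2 * C + 1) * l) ^ 2" using M1 by (intro power_mono) auto
    then show ?thesis by (simp add: power_mult_distrib)
  qed
  have P3: "l powr b \<le> 2 powr b * b powr b * sqrt (real n)"
  proof -
    have b0: "b > 0" unfolding b_def using a0 by simp
    have sn: "sqrt (real n) > 1" using n1 by simp
    have "l = 2 * ln (sqrt (real n))" unfolding l_def using n1 by (simp add: ln_sqrt)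
    then have "l powr b = 2 powr b * ln (sqrt (real n)) powr b"
      using sn by (simp add: powr_mult)
    also have "ln (sqrt (real n)) powr b \<le> b powr b * sqrt (real n)" by (rule ln_powr_bound2[OF sn b0])
    finally show ?thesis by (simp add: mult_left_mono mult.assoc)
  qed
  have T1: "real M ^ 2 * (2 * real d) ^ (M + 1) / real (n * d) \<le> Acst d / sqrt (real n)"
  proof -
    have nd: "real (n * d) \<ge> real n"
    proof -
      have "real n * 1 \<le> real n * real d" using d3 by (intro mult_left_mono) auto
      then show ?thesis by simp
    qed
    have "real M ^ 2 * (2 * real d) ^ (M + 1) \<le> (2 * C + 1) ^ 2 * l ^ 2 * (4 * real d ^ 2 * l powr a)"
      using P1 P2 by (intro mult_mono) auto
    also have "\<dots> = 4 * real d ^ 2 * (2 * C + 1) ^ 2 * l powr b"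
      using l3' unfolding b_def by (simp add: powr_add powr_numeral mult_ac)
    also have "\<dots> \<le> 4 * real d ^ 2 * (2 * C + 1) ^ 2 * (2 powr b * b powr b * sqrt (real n))"
      using P3 by (intro mult_left_mono) auto
    also have "\<dots> = Acst d * sqrt (real n)"
      unfolding Acst_def b_def a_def C_def bexp_def by (simp add: mult_ac)
    finally have num: "real M ^ 2 * (2 * real d) ^ (M + 1) \<le> Acst d * sqrt (real n)" .
    have "real M ^ 2 * (2 * real d) ^ (M + 1) / real (n * d) \<le> Acst d * sqrt (real n) / real n"
    proof (rule frac_le)
      have "0 \<le> real M ^ 2 * (2 * real d) ^ (M + 1)" by simp
      then show "0 \<le> Acst d * sqrt (real n)" using num by linarith
    qed (use num nd n1 in auto)
    also have "\<dots> = Acst d * sqrt (real n) / (sqrt (real n) * sqrt (real n))" by (simp only: sqn)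
    also have "\<dots> = Acst d / sqrt (real n)" using n1 by (simp del: real_sqrt_mult_self)
    finally show ?thesis .
  qed
  show "real (2 * Kn d n + 1) ^ 2 * (2 * real d) ^ (2 * Kn d n + 1 + 1) / real (n * d)
       + ln (real n) ^ 7 * (1 - 1 / (2 * real d)) ^ Kn d n \<le> Acst d / sqrt (real n) + 2 / ln (real n)"
    using T1 T2 unfolding M_def K_def \<rho>_def l_def by simp
qed


lemma eventually_good_n:
  fixes d :: nat and \<epsilon> :: real
  assumes "\<epsilon> > 0"
  shows "\<exists>N. \<forall>n\<ge>N. ln (real n) \<ge> 3 \<and> sqrt (real n) \<ge> 8 * (2 * Cc d + 1) \<and>
            Acst d / sqrt (real n) + 2 / ln (real n) < \<epsilon>"
proof -
  have ln_n: "filterlim (\<lambda>n. ln (real n)) at_top sequentially"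
    by (rule filterlim_compose[OF ln_at_top filterlim_real_sequentially])
  have sq_n: "filterlim (\<lambda>n. sqrt (real n)) at_top sequentially"
    by (rule filterlim_compose[OF sqrt_at_top filterlim_real_sequentially])
  have lim: "((\<lambda>n. Acst d / sqrt (real n) + 2 / ln (real n)) \<longlongrightarrow> 0) sequentially"
  proof -
    have "((\<lambda>n. Acst d / sqrt (real n)) \<longlongrightarrow> 0) sequentially"
      by (rule tendsto_divide_0[OF tendsto_const filterlim_at_top_imp_at_infinity[OF sq_n]])
    moreover have "((\<lambda>n. 2 / ln (real n)) \<longlongrightarrow> 0) sequentially"
      by (rule tendsto_divide_0[OF tendsto_const filterlim_at_top_imp_at_infinity[OF ln_n]])
    ultimately show ?thesis using tendsto_add[of _ 0 _ _ 0] by fastforce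
  qed
  have e1: "eventually (\<lambda>n. ln (real n) \<ge> 3) sequentially"
    using ln_n by (simp add: filterlim_at_top)
  have e2: "eventually (\<lambda>n. sqrt (real n) \<ge> 8 * (2 * Cc d + 1)) sequentially"
    using sq_n by (simp add: filterlim_at_top)
  have e3: "eventually (\<lambda>n. Acst d / sqrt (real n) + 2 / ln (real n) < \<epsilon>) sequentially"
    using order_tendstoD(2)[OF lim assms] .
  have "eventually (\<lambda>n. ln (real n) \<ge> 3 \<and> sqrt (real n) \<ge> 8 * (2 * Cc d + 1) \<and>
            Acst d / sqrt (real n) + 2 / ln (real n) < \<epsilon>) sequentially"
    using e1 e2 e3 by eventually_elim auto
  then show ?thesis by (simp add: eventually_sequentially)
qed

lemma final_bound:
  fixes d n :: nat and P :: "mt \<Rightarrow> (nat \<Rightarrow> nat) stream \<Rightarrow> bool"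
  assumes d3: "d \<ge> 3" and ev: "even (n * d)" and l3: "ln (real n) \<ge> 3"
    and nbig: "sqrt (real n) \<ge> 8 * (2 * Cc d + 1)"
    and incl: "\<And>m \<omega>. m \<in> PMs (clones n d) \<Longrightarrow> good n d (Kn d n) m \<Longrightarrow>
        real (card (informed m \<omega> (Kn d n))) > ln (real n) ^ 7 \<Longrightarrow> P m \<omega>"
    and Pm: "Measurable.pred (push_space n d) (\<lambda>x. P (fst x) (snd x))"
  shows "push_prob n d P \<ge> 1 - (Acst d / sqrt (real n) + 2 / ln (real n))"
proof -
  define K where "K = Kn d n"
  have n1: "n \<ge> 1"
  proof (rule ccontr)
    assume "\<not> n \<ge> 1" then have "n = 0" by simp
    then show False using l3 by simp
  qed
  note ab = asym_bound[OF d3 l3 nbig, folded K_def]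
  have big: "2 * (2 * K + 1) < n * d" using ab(1) by simp
  have "measure_pmf.prob (config_pmf n d) {m. \<not> good n d K m}
      \<le> (\<Sum>k\<in>{1..2*K+1}. real (card (Cand n d k)) / (real (n * d) - 2 * real k) ^ k)"
    by (rule prob_not_good[OF ev big])
  also have "\<dots> \<le> real (2 * K + 1) ^ 2 * (2 * real d) ^ (2 * K + 1 + 1) / real (n * d)"
    by (rule cand_sum) (use ab(1) d3 in auto)
  finally have pg: "measure_pmf.prob (config_pmf n d) {m. \<not> good n d K m}
      \<le> real (2 * K + 1) ^ 2 * (2 * real d) ^ (2 * K + 1 + 1) / real (n * d)" .
  have "push_prob n d P \<ge> 1 - (measure_pmf.prob (config_pmf n d) {m. \<not> good n d K m}
            + ln (real n) ^ 7 * (1 - 1 / (2 * real d)) ^ K)"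
    by (rule main_bound[OF d3 n1 ev]) (use incl Pm K_def in auto)
  then show ?thesis using pg ab(2) by linarith
qed

lemma Kn_le:
  assumes "ln (real n) \<ge> 3" "d \<ge> 3"
  shows "real (Kn d n) \<le> Cc d * ln (ln (real n))"
proof -
  have "ln (ln (real n)) \<ge> 0" using assms by simp
  moreover have "Cc d > 0" using assms unfolding Cc_def by simp
  ultimately have "Cc d * ln (ln (real n)) \<ge> 0" by simp
  then show ?thesis unfolding Kn_def by linarith
qed

theorem lemma6:
  fixes d :: nat
  assumes "d \<ge> 3"
  shows "(\<exists>C>0. \<forall>\<epsilon>>0. \<exists>N. \<forall>n\<ge>N. even (d * n) \<longrightarrow>
            push_prob n d (\<lambda>m \<omega>. \<exists>t. is_T0 n m \<omega> t \<and> real t \<le> C * ln (ln (real n)))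
              \<ge> 1 - \<epsilon>)
       \<and> (\<forall>\<epsilon>>0. \<exists>N. \<forall>n\<ge>N. even (d * n) \<longrightarrow>
            push_prob n d (\<lambda>m \<omega>. \<exists>t. is_T0 n m \<omega> t \<and> is_tree d m (informed m \<omega> t))
              \<ge> 1 - \<epsilon>)"
proof (intro conjI)
  have d3: "d \<ge> 3" using assms .
  show "\<exists>C>0. \<forall>\<epsilon>>0. \<exists>N. \<forall>n\<ge>N. even (d * n) \<longrightarrow>
            push_prob n d (\<lambda>m \<omega>. \<exists>t. is_T0 n m \<omega> t \<and> real t \<le> C * ln (ln (real n)))
              \<ge> 1 - \<epsilon>"
  proof (intro exI[of _ "Cc d"] conjI allI impI)
    show "Cc d > 0" using d3 unfolding Cc_def by simp
    fix \<epsilon> :: real assume e: "\<epsilon> > 0"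
    obtain N where N: "\<forall>n\<ge>N. ln (real n) \<ge> 3 \<and> sqrt (real n) \<ge> 8 * (2 * Cc d + 1) \<and>
            Acst d / sqrt (real n) + 2 / ln (real n) < \<epsilon>"
      using eventually_good_n[OF e] by blast
    show "\<exists>N. \<forall>n\<ge>N. even (d * n) \<longrightarrow>
            push_prob n d (\<lambda>m \<omega>. \<exists>t. is_T0 n m \<omega> t \<and> real t \<le> Cc d * ln (ln (real n))) \<ge> 1 - \<epsilon>"
    proof (intro exI[of _ N] allI impI)
      fix n assume n: "n \<ge> N" and ev: "even (d * n)"
      have c: "ln (real n) \<ge> 3" "sqrt (real n) \<ge> 8 * (2 * Cc d + 1)"
          "Acst d / sqrt (real n) + 2 / ln (real n) < \<epsilon>" using N n by auto
      have n1: "n \<ge> 1" using c(1) by (cases n) auto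
      have "push_prob n d (\<lambda>m \<omega>. \<exists>t. is_T0 n m \<omega> t \<and> real t \<le> Cc d * ln (ln (real n)))
          \<ge> 1 - (Acst d / sqrt (real n) + 2 / ln (real n))"
      proof (rule final_bound[OF d3 _ c(1) c(2)])
        show "even (n * d)" using ev by (simp add: mult.commute)
        fix m \<omega> assume pm: "m \<in> PMs (clones n d)" and gd: "good n d (Kn d n) m"
          and big: "real (card (informed m \<omega> (Kn d n))) > ln (real n) ^ 7"
        obtain t where t: "is_T0 n m \<omega> t" "t \<le> Kn d n"
          using good_event[OF pm gd n1 big] by blast
        have "real t \<le> Cc d * ln (ln (real n))" using t(2) Kn_le[OF c(1) d3] by linarith
        then show "\<exists>t. is_T0 n m \<omega> t \<and> real t \<le> Cc d * ln (ln (real n))" using t by blast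
      next
        show "Measurable.pred (push_space n d)
           (\<lambda>x. \<exists>t. is_T0 n (fst x) (snd x) t \<and> real t \<le> Cc d * ln (ln (real n)))"
          using pred_T0[where Q="\<lambda>t m A. real t \<le> Cc d * ln (ln (real n))"] by simp
      qed
      then show "push_prob n d (\<lambda>m \<omega>. \<exists>t. is_T0 n m \<omega> t \<and> real t \<le> Cc d * ln (ln (real n))) \<ge> 1 - \<epsilon>"
        using c(3) by linarith
    qed
  qed
  show "\<forall>\<epsilon>>0. \<exists>N. \<forall>n\<ge>N. even (d * n) \<longrightarrow>
            push_prob n d (\<lambda>m \<omega>. \<exists>t. is_T0 n m \<omega> t \<and> is_tree d m (informed m \<omega> t))
              \<ge> 1 - \<epsilon>"
  proof (intro allI impI)
    fix \<epsilon> :: real assume e: "\<epsilon> > 0"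
    obtain N where N: "\<forall>n\<ge>N. ln (real n) \<ge> 3 \<and> sqrt (real n) \<ge> 8 * (2 * Cc d + 1) \<and>
            Acst d / sqrt (real n) + 2 / ln (real n) < \<epsilon>"
      using eventually_good_n[OF e] by blast
    show "\<exists>N. \<forall>n\<ge>N. even (d * n) \<longrightarrow>
            push_prob n d (\<lambda>m \<omega>. \<exists>t. is_T0 n m \<omega> t \<and> is_tree d m (informed m \<omega> t)) \<ge> 1 - \<epsilon>"
    proof (intro exI[of _ N] allI impI)
      fix n assume n: "n \<ge> N" and ev: "even (d * n)"
      have c: "ln (real n) \<ge> 3" "sqrt (real n) \<ge> 8 * (2 * Cc d + 1)"
          "Acst d / sqrt (real n) + 2 / ln (real n) < \<epsilon>" using N n by auto
      have n1: "n \<ge> 1" using c(1) by (cases n) auto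
      have "push_prob n d (\<lambda>m \<omega>. \<exists>t. is_T0 n m \<omega> t \<and> is_tree d m (informed m \<omega> t))
          \<ge> 1 - (Acst d / sqrt (real n) + 2 / ln (real n))"
      proof (rule final_bound[OF d3 _ c(1) c(2)])
        show "even (n * d)" using ev by (simp add: mult.commute)
        fix m \<omega> assume pm: "m \<in> PMs (clones n d)" and gd: "good n d (Kn d n) m"
          and big: "real (card (informed m \<omega> (Kn d n))) > ln (real n) ^ 7"
        show "\<exists>t. is_T0 n m \<omega> t \<and> is_tree d m (informed m \<omega> t)"
          using good_event[OF pm gd n1 big] by blast
      next
        show "Measurable.pred (push_space n d)
           (\<lambda>x. \<exists>t. is_T0 n (fst x) (snd x) t \<and> is_tree d (fst x) (informed (fst x) (snd x) t))"
          using pred_T0[where Q="\<lambda>t m A. is_tree d m A"] by simp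
      qed
      then show "push_prob n d (\<lambda>m \<omega>. \<exists>t. is_T0 n m \<omega> t \<and> is_tree d m (informed m \<omega> t)) \<ge> 1 - \<epsilon>"
        using c(3) by linarith
    qed
  qed
qed


end
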